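(* Let $p$ be a program. Then $p$ is in $\to_{\mathrm{und}}$-normal form (there is no $q$ with $p\to_{\mathrm{und}}q$) if and only if $\mathrm{unorm}(p)$.
   Context: Syntax. Terms $t,u,s ::= x\mid\lambda x.t\mid t\,u$; values $v ::= \lambda x.t$ (variables are not values); environments $E ::= \epsilon\mid E[x\leftarrow t]$; programs $p ::= (t,E)$; $x$ is bound in $E$ and $u$ in $(u,E[x\leftarrow t])$; up to $\alpha$; appended ES bind variables not in the domain of the program/context. Inert terms $i ::= x\mid i\,f$, fireballs $f ::= v\mid i$, non-variable inert terms $i^{+} ::= i\,f$. Contexts. Open term evaluation contexts $\mathcal{H} ::= \langle\cdot\rangle\mid\mathcal{H}\,t\mid i\,\mathcal{H}$; applicative term contexts $\mathcal{H}^{@} ::= \langle\cdot\rangle\,t\mid\mathcal{H}^{@}\,t\mid i\,\mathcal{H}^{@}$. Term contexts $C ::= \langle\cdot\rangle\mid C\,t\mid t\,C$; environment contexts $G ::= E[x\leftarrow C]\mid G[x\leftarrow u]$; program contexts $P ::= (C,E)\mid(t,G)$. Appending: $(t,E)@[x\leftarrow u]=(t,E[x\leftarrow u])$, $(C,E)@[x\leftarrow u]=(C,E[x\leftarrow u])$, $(t,G)@[x\leftarrow u]=(t,G[x\leftarrow u])$, and $(t,E)@[x\leftarrow C]:=(t,E[x\leftarrow C])$. Plugging: $(C,E)\langle(t,E')\rangle=(C\langle t\rangle,E'E)$; $(u,E[x\leftarrow C])\langle(t,E')\rangle=(u,E[x\leftarrow C\langle t\rangle]E')$; $(u,G[x\leftarrow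 s])\langle(t,E)\rangle=((u,G)\langle(t,E)\rangle)@[x\leftarrow s]$; $P\langle t\rangle:=P\langle(t,\epsilon)\rangle$. Look-up $P(x)=t$ if the ES list of $P$ contains $[x\leftarrow t]$ with $t$ a term, $\bot$ otherwise. $v^{\alpha}$: copy of $v$ with fresh bound variables. Variable sets. $nv(x)=\{x\}$, $nv(\lambda x.t)=\emptyset$, $nv(tu)=nv(t)\cup nv(u)$; $nv((t,\epsilon))=nv(t)$, $nv((t,E[x\leftarrow u]))=nv((t,E))$ if $x\notin nv((t,E))$, else $(nv((t,E))\setminus\{x\})\cup nv(u)$. $an(\lambda x.t)=an(x)=\emptyset$; $an(tu)=\{x\}\cup an(u)$ if $t=x$ variable, else $an(t)\cup an(u)$; $an((t,\epsilon))=an(t)$; $an((t,E[x\leftarrow u]))$ is $an((t,E))$ if $x\notin nv((t,E))$; $(an((t,E))\setminus\{x\})\cup an(u)$ if $x\in nv((t,E))$ and ($x\notin an((t,E))$ or $u$ not a variable); $(an((t,E))\setminus\{x\})\cup\{y\}$ if $x\in nv((t,E))$, $x\in an((t,E))$, $u=y$ variable; $an(\langle\cdot\rangle)=\emptyset$, $an(\mathcal{H}\,t)=an(\mathcal{H})$, $an(i\,\mathcal{H})=an(i)\cup an(\mathcal{H})$. $un(\lambda x.t)=\emptyset$, $un(x)=\{x\}$, $un(tu)=un(u)$ if $t$ variable, else $un(t)\cup un(u)$; $un((t,\epsilon))=un(t)$; $un((t,E[x\leftarrow u]))$ is $un((t,E))$ if $x\notin un((t,E))$ and ($x\notin nv((t,E))$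 or $u$ a variable), and $(un((t,E))\setminus\{x\})\cup un(u)$ if $x\in un((t,E))$ or ($x\in nv((t,E))$ and $u$ not a variable); $un(\langle\cdot\rangle)=\emptyset$, $un(\mathcal{H}\,t)=un(\mathcal{H})$, $un(i\,\mathcal{H})=un(i)\cup un(\mathcal{H})$. $\mathrm{upd}(S,x,y):=S$ if $x\notin S$, else $(S\setminus\{x\})\cup\{y\}$. Multiplicative contexts $P\in\mathcal{M}_{{\mathcal{U}},{\mathcal{A}}}$, inductively: $(\mathcal{H},\epsilon)\in\mathcal{M}_{un(\mathcal{H}),an(\mathcal{H})}$; and, each with premise $P\in\mathcal{M}_{{\mathcal{U}},{\mathcal{A}}}$: $x\in{\mathcal{U}}\cup{\mathcal{A}}$ $\Rightarrow$ $P@[x\leftarrow y]\in\mathcal{M}_{\mathrm{upd}({\mathcal{U}},x,y),\mathrm{upd}({\mathcal{A}},x,y)}$; $x\notin{\mathcal{U}}\cup{\mathcal{A}}$ $\Rightarrow$ $P@[x\leftarrow t]\in\mathcal{M}_{{\mathcal{U}},{\mathcal{A}}}$; $x\in{\mathcal{U}}\cup{\mathcal{A}}$ $\Rightarrow$ $P@[x\leftarrow i^{+}]\in\mathcal{M}_{({\mathcal{U}}\setminus\{x\})\cup un(i^{+}),({\mathcal{A}}\setminus\{x\})\cup an(i^{+})}$; $x\in{\mathcal{U}}\setminus{\mathcal{A}}$ $\Rightarrow$ $P@[x\leftarrow v]\in\mathcal{M}_{{\mathcal{U}}\setminus\{x\},{\mathcal{A}}}$; $x\notin{\mathcal{U}}\cup{\mathcal{A}}$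 $\Rightarrow$ $P\langle x\rangle@[x\leftarrow\mathcal{H}]\in\mathcal{M}_{{\mathcal{U}}\cup un(\mathcal{H}),{\mathcal{A}}\cup an(\mathcal{H})}$. Exponential contexts $P\in\mathcal{X}_{{\mathcal{U}},{\mathcal{A}}}$, inductively: $(\mathcal{H}^{@},\epsilon)\in\mathcal{X}_{un(\mathcal{H}^{@}),an(\mathcal{H}^{@})}$; $P\in\mathcal{M}_{{\mathcal{U}},{\mathcal{A}}}$, $x\notin{\mathcal{U}}\cup{\mathcal{A}}$ $\Rightarrow$ $P\langle x\rangle@[x\leftarrow\mathcal{H}^{@}]\in\mathcal{X}_{({\mathcal{U}}\setminus\{x\})\cup un(\mathcal{H}^{@}),{\mathcal{A}}\cup an(\mathcal{H}^{@})}$; and, each with premise $P\in\mathcal{X}_{{\mathcal{U}},{\mathcal{A}}}$: $x\in{\mathcal{U}}\cup{\mathcal{A}}$ $\Rightarrow$ $P@[x\leftarrow y]\in\mathcal{X}_{\mathrm{upd}({\mathcal{U}},x,y),\mathrm{upd}({\mathcal{A}},x,y)}$; $x\in{\mathcal{U}}\cup{\mathcal{A}}$ $\Rightarrow$ $P@[x\leftarrow i^{+}]\in\mathcal{X}_{({\mathcal{U}}\setminus\{x\})\cup un(i^{+}),({\mathcal{A}}\setminus\{x\})\cup an(i^{+})}$; $x\notin{\mathcal{U}}\cup{\mathcal{A}}$ $\Rightarrow$ $P@[x\leftarrow t]\in\mathcal{X}_{{\mathcal{U}},{\mathcal{A}}}$; $x\in{\mathcal{U}}\setminus{\mathcal{A}}$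 $\Rightarrow$ $P@[x\leftarrow v]\in\mathcal{X}_{{\mathcal{U}}\setminus\{x\},{\mathcal{A}}}$; $x\notin{\mathcal{A}}$ $\Rightarrow$ $P\langle x\rangle@[x\leftarrow\langle\cdot\rangle]\in\mathcal{X}_{{\mathcal{U}}\setminus\{x\},{\mathcal{A}}}$. Useful Open CbNeed rules: $P\langle(\lambda x.t)u\rangle\to_{\mathrm{um}}P\langle(t,[x\leftarrow u])\rangle$ if $P\in\mathcal{M}_{{\mathcal{U}},{\mathcal{A}}}$ for some ${\mathcal{U}},{\mathcal{A}}$; $P\langle x\rangle\to_{\mathrm{ue}}P\langle v^{\alpha}\rangle$ if $P\in\mathcal{X}_{{\mathcal{U}},{\mathcal{A}}}$ for some ${\mathcal{U}},{\mathcal{A}}$ and $P(x)=v$; $\to_{\mathrm{und}}:=\to_{\mathrm{um}}\cup\to_{\mathrm{ue}}$. Predicates, inductively. $\mathrm{gvar}_x((x,\epsilon))$; $\mathrm{gvar}_x(p)\Rightarrow\mathrm{gvar}_y(p@[x\leftarrow y])$; $\mathrm{gvar}_x(p)$, $z\neq x$ $\Rightarrow$ $\mathrm{gvar}_x(p@[z\leftarrow t])$. $\mathrm{uabs}((v,\epsilon))$; $\mathrm{gvar}_x(p)\Rightarrow\mathrm{uabs}(p@[x\leftarrow v])$; $\mathrm{uabs}(p)\Rightarrow\mathrm{uabs}(p@[x\leftarrow t])$. $\mathrm{uinert}((i^{+},\epsilon))$; $\mathrm{gvar}_x(p)\Rightarrow\mathrm{uinert}(p@[x\leftarrow i^{+}])$;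 $\mathrm{uinert}(p)$, $x\in nv(p)$ $\Rightarrow$ $\mathrm{uinert}(p@[x\leftarrow i])$; $\mathrm{uinert}(p)$, $x\in un(p)$, $x\notin an(p)$ $\Rightarrow$ $\mathrm{uinert}(p@[x\leftarrow v])$; $\mathrm{uinert}(p)$, $x\notin nv(p)$ $\Rightarrow$ $\mathrm{uinert}(p@[x\leftarrow t])$. $\mathrm{unorm}(p)$ iff $\mathrm{uinert}(p)$ or $\mathrm{uabs}(p)$ or $\mathrm{gvar}_x(p)$ for some $x$. *)

theory Defs
  imports Main
begin

type_synonym var = nat

datatype trm = Var var | Lam var trm | App trm trm

(* an environment E = [x1<-t1]...[xn<-tn] is the list [(x1,t1),...,(xn,tn)];
   the head is the innermost ES, the last element the outermost one;
   E[x<-t] is E @ [(x,t)] *)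
type_synonym env = "(var \<times> trm) list"

type_synonym prog = "trm \<times> env"

fun is_var :: "trm \<Rightarrow> bool" where
  "is_var (Var x) = True" | "is_var _ = False"

fun is_val :: "trm \<Rightarrow> bool" where
  "is_val (Lam x t) = True" | "is_val _ = False"

inductive inert :: "trm \<Rightarrow> bool" where
  inert_var: "inert (Var x)"
| inert_app: "inert i \<Longrightarrow> is_val f \<or> inert f \<Longrightarrow> inert (App i f)"

definition fireball :: "trm \<Rightarrow> bool" where
  "fireball f \<longleftrightarrow> is_val f \<or> inert f"

definition inert_plus :: "trm \<Rightarrow> bool" where
  "inert_plus t \<longleftrightarrow> inert t \<and> \<not> is_var t"

definition app_es :: "prog \<Rightarrow> var \<Rightarrow> trm \<Rightarrow> prog" where
  "app_es p x u = (fst p, snd p @ [(x, u)])"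

definition pdom :: "prog \<Rightarrow> var set" where
  "pdom p = fst ` set (snd p)"

fun fv :: "trm \<Rightarrow> var set" where
  "fv (Var x) = {x}"
| "fv (Lam x t) = fv t - {x}"
| "fv (App t u) = fv t \<union> fv u"

(* free variables of a program; the environment is traversed from the outermost ES *)
fun fv_r :: "trm \<Rightarrow> env \<Rightarrow> var set" where
  "fv_r t [] = fv t"
| "fv_r t ((x,u) # R) = (fv_r t R - {x}) \<union> fv u"

definition fvp :: "prog \<Rightarrow> var set" where
  "fvp p = fv_r (fst p) (rev (snd p))"

fun bl :: "trm \<Rightarrow> var list" where
  "bl (Var x) = []"
| "bl (Lam x t) = x # bl t"
| "bl (App t u) = bl t @ bl u"

definition pbl :: "prog \<Rightarrow> var list" where
  "pbl p = bl (fst p) @ concat (map (\<lambda>(x,u). x # bl u) (snd p))"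

(* the program is a Barendregt representative of its alpha-class:
   all binders pairwise distinct, and no bound name occurs free *)
definition wellnamed :: "prog \<Rightarrow> bool" where
  "wellnamed p \<longleftrightarrow> distinct (pbl p) \<and> set (pbl p) \<inter> fvp p = {}"

fun vars :: "trm \<Rightarrow> var set" where
  "vars (Var x) = {x}"
| "vars (Lam x t) = insert x (vars t)"
| "vars (App t u) = vars t \<union> vars u"

definition pvars :: "prog \<Rightarrow> var set" where
  "pvars p = vars (fst p) \<union> (\<Union>(x,u)\<in>set (snd p). insert x (vars u))"

(* swapping two names (a capture-free renaming when z does not occur) *)
definition sw :: "var \<Rightarrow> var \<Rightarrow> var \<Rightarrow> var" where
  "sw a b c = (if c = a then b else if c = b then a else c)"

fun swap :: "var \<Rightarrow> var \<Rightarrow> trm \<Rightarrow> trm" where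
  "swap a b (Var x) = Var (sw a b x)"
| "swap a b (Lam x t) = Lam (sw a b x) (swap a b t)"
| "swap a b (App t u) = App (swap a b t) (swap a b u)"

fun nv :: "trm \<Rightarrow> var set" where
  "nv (Var x) = {x}"
| "nv (Lam x t) = {}"
| "nv (App t u) = nv t \<union> nv u"

fun an :: "trm \<Rightarrow> var set" where
  "an (Lam x t) = {}"
| "an (Var x) = {}"
| "an (App t u) = (case t of Var x \<Rightarrow> {x} \<union> an u | _ \<Rightarrow> an t \<union> an u)"

fun un :: "trm \<Rightarrow> var set" where
  "un (Lam x t) = {}"
| "un (Var x) = {x}"
| "un (App t u) = (case t of Var x \<Rightarrow> un u | _ \<Rightarrow> un t \<union> un u)"

fun nv_r :: "trm \<Rightarrow> env \<Rightarrow> var set" where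
  "nv_r t [] = nv t"
| "nv_r t ((x,u) # R) =
     (if x \<notin> nv_r t R then nv_r t R else (nv_r t R - {x}) \<union> nv u)"

definition nvp :: "prog \<Rightarrow> var set" where
  "nvp p = nv_r (fst p) (rev (snd p))"

fun an_r :: "trm \<Rightarrow> env \<Rightarrow> var set" where
  "an_r t [] = an t"
| "an_r t ((x,u) # R) =
     (if x \<notin> nv_r t R then an_r t R
      else if x \<notin> an_r t R \<or> \<not> is_var u then (an_r t R - {x}) \<union> an u
      else (case u of Var y \<Rightarrow> (an_r t R - {x}) \<union> {y} | _ \<Rightarrow> {}))"

definition anp :: "prog \<Rightarrow> var set" where
  "anp p = an_r (fst p) (rev (snd p))"

fun un_r :: "trm \<Rightarrow> env \<Rightarrow> var set" where
  "un_r t [] = un t"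
| "un_r t ((x,u) # R) =
     (if x \<notin> un_r t R \<and> (x \<notin> nv_r t R \<or> is_var u) then un_r t R
      else (un_r t R - {x}) \<union> un u)"

definition unp :: "prog \<Rightarrow> var set" where
  "unp p = un_r (fst p) (rev (snd p))"

definition upd :: "var set \<Rightarrow> var \<Rightarrow> var \<Rightarrow> var set" where
  "upd S x y = (if x \<notin> S then S else (S - {x}) \<union> {y})"

datatype tctx = Hole | CAppL tctx trm | CAppR trm tctx

fun plugC :: "tctx \<Rightarrow> trm \<Rightarrow> trm" where
  "plugC Hole t = t"
| "plugC (CAppL C u) t = App (plugC C t) u"
| "plugC (CAppR u C) t = App u (plugC C t)"

inductive isH :: "tctx \<Rightarrow> bool" where
  "isH Hole"
| "isH H \<Longrightarrow> isH (CAppL H t)"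
| "inert i \<Longrightarrow> isH H \<Longrightarrow> isH (CAppR i H)"

inductive isHa :: "tctx \<Rightarrow> bool" where
  "isHa (CAppL Hole t)"
| "isHa H \<Longrightarrow> isHa (CAppL H t)"
| "inert i \<Longrightarrow> isHa H \<Longrightarrow> isHa (CAppR i H)"

fun ctx_an :: "tctx \<Rightarrow> var set" where
  "ctx_an Hole = {}"
| "ctx_an (CAppL C t) = ctx_an C"
| "ctx_an (CAppR i C) = an i \<union> ctx_an C"

fun ctx_un :: "tctx \<Rightarrow> var set" where
  "ctx_un Hole = {}"
| "ctx_un (CAppL C t) = ctx_un C"
| "ctx_un (CAppR i C) = un i \<union> ctx_un C"

(* program contexts P ::= (C,E) | (t,G), with G ::= E[x<-C] | G[x<-u];
   PG t E x C E' stands for (t, E[x<-C]E') *)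
datatype pctx = PC tctx env | PG trm env var tctx env

fun appP :: "pctx \<Rightarrow> var \<Rightarrow> trm \<Rightarrow> pctx" where
  "appP (PC C E) x u = PC C (E @ [(x,u)])"
| "appP (PG t E y C E') x u = PG t E y C (E' @ [(x,u)])"

definition appC :: "prog \<Rightarrow> var \<Rightarrow> tctx \<Rightarrow> pctx" where
  "appC p x C = PG (fst p) (snd p) x C []"

fun plugP :: "pctx \<Rightarrow> prog \<Rightarrow> prog" where
  "plugP (PC C E) (t, E') = (plugC C t, E' @ E)"
| "plugP (PG u E x C E2) (t, E') = (u, E @ [(x, plugC C t)] @ E' @ E2)"

fun cdom :: "pctx \<Rightarrow> var set" where
  "cdom (PC C E) = fst ` set E"
| "cdom (PG t E x C E') = fst ` set E \<union> {x} \<union> fst ` set E'"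

(* look-up P(x): the ES [x<-t] of P whose scope contains the hole
   (the innermost such, i.e. the first in list order) *)
fun lookupP :: "pctx \<Rightarrow> var \<Rightarrow> trm option" where
  "lookupP (PC C E) x = map_of E x"
| "lookupP (PG t E y C E') x = map_of E' x"

inductive isM :: "pctx \<Rightarrow> var set \<Rightarrow> var set \<Rightarrow> bool" where
  M_base: "isH H \<Longrightarrow> isM (PC H []) (ctx_un H) (ctx_an H)"
| M_var: "isM P U A \<Longrightarrow> x \<notin> cdom P \<Longrightarrow> x \<in> U \<union> A \<Longrightarrow>
     isM (appP P x (Var y)) (upd U x y) (upd A x y)"
| M_gc: "isM P U A \<Longrightarrow> x \<notin> cdom P \<Longrightarrow> x \<notin> U \<union> A \<Longrightarrow>
     isM (appP P x t) U A"
| M_inert: "isM P U A \<Longrightarrow> x \<notin> cdom P \<Longrightarrow> x \<in> U \<union> A \<Longrightarrow> inert_plus i \<Longrightarrow>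
     isM (appP P x i) ((U - {x}) \<union> un i) ((A - {x}) \<union> an i)"
| M_val: "isM P U A \<Longrightarrow> x \<notin> cdom P \<Longrightarrow> x \<in> U - A \<Longrightarrow> is_val v \<Longrightarrow>
     isM (appP P x v) (U - {x}) A"
| M_hole: "isM P U A \<Longrightarrow> x \<notin> cdom P \<Longrightarrow> x \<notin> U \<union> A \<Longrightarrow> isH H \<Longrightarrow>
     isM (appC (plugP P (Var x, [])) x H) (U \<union> ctx_un H) (A \<union> ctx_an H)"

inductive isX :: "pctx \<Rightarrow> var set \<Rightarrow> var set \<Rightarrow> bool" where
  X_base: "isHa H \<Longrightarrow> isX (PC H []) (ctx_un H) (ctx_an H)"
| X_fromM: "isM P U A \<Longrightarrow> x \<notin> cdom P \<Longrightarrow> x \<notin> U \<union> A \<Longrightarrow> isHa H \<Longrightarrow>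
     isX (appC (plugP P (Var x, [])) x H) ((U - {x}) \<union> ctx_un H) (A \<union> ctx_an H)"
| X_var: "isX P U A \<Longrightarrow> x \<notin> cdom P \<Longrightarrow> x \<in> U \<union> A \<Longrightarrow>
     isX (appP P x (Var y)) (upd U x y) (upd A x y)"
| X_inert: "isX P U A \<Longrightarrow> x \<notin> cdom P \<Longrightarrow> x \<in> U \<union> A \<Longrightarrow> inert_plus i \<Longrightarrow>
     isX (appP P x i) ((U - {x}) \<union> un i) ((A - {x}) \<union> an i)"
| X_gc: "isX P U A \<Longrightarrow> x \<notin> cdom P \<Longrightarrow> x \<notin> U \<union> A \<Longrightarrow>
     isX (appP P x t) U A"
| X_val: "isX P U A \<Longrightarrow> x \<notin> cdom P \<Longrightarrow> x \<in> U - A \<Longrightarrow> is_val v \<Longrightarrow>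
     isX (appP P x v) (U - {x}) A"
| X_hole: "isX P U A \<Longrightarrow> x \<notin> cdom P \<Longrightarrow> x \<notin> A \<Longrightarrow>
     isX (appC (plugP P (Var x, [])) x Hole) (U - {x}) A"

(* P<(\<lambda>x.t)u> \<rightarrow>um P<(t,[x<-u])>; the bound name x is first renamed to a
   name z occurring nowhere in the program (so that the appended ES binds a
   variable not in the domain of P) *)
definition um_step :: "prog \<Rightarrow> prog \<Rightarrow> bool" where
  "um_step p q \<longleftrightarrow> (\<exists>P U A x t u z. isM P U A \<and> p = plugP P (App (Lam x t) u, []) \<and>
      z \<notin> pvars p \<and> q = plugP P (swap x z t, [(z, u)]))"

(* P<x> \<rightarrow>ue P<v^\<alpha>> if P(x) = v; v^\<alpha> is alpha-equivalent to v, and the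
   resulting program is the same up to alpha whichever copy is used *)
definition ue_step :: "prog \<Rightarrow> prog \<Rightarrow> bool" where
  "ue_step p q \<longleftrightarrow> (\<exists>P U A x v. isX P U A \<and> p = plugP P (Var x, []) \<and>
      lookupP P x = Some v \<and> is_val v \<and> q = plugP P (v, []))"

definition und_step :: "prog \<Rightarrow> prog \<Rightarrow> bool" where
  "und_step p q \<longleftrightarrow> um_step p q \<or> ue_step p q"

inductive gvar :: "var \<Rightarrow> prog \<Rightarrow> bool" where
  "gvar x (Var x, [])"
| "gvar x p \<Longrightarrow> x \<notin> pdom p \<Longrightarrow> gvar y (app_es p x (Var y))"
| "gvar x p \<Longrightarrow> z \<notin> pdom p \<Longrightarrow> z \<noteq> x \<Longrightarrow> gvar x (app_es p z t)"

inductive uabs :: "prog \<Rightarrow> bool" where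
  "is_val v \<Longrightarrow> uabs (v, [])"
| "gvar x p \<Longrightarrow> x \<notin> pdom p \<Longrightarrow> is_val v \<Longrightarrow> uabs (app_es p x v)"
| "uabs p \<Longrightarrow> x \<notin> pdom p \<Longrightarrow> uabs (app_es p x t)"

inductive uinert :: "prog \<Rightarrow> bool" where
  "inert_plus i \<Longrightarrow> uinert (i, [])"
| "gvar x p \<Longrightarrow> x \<notin> pdom p \<Longrightarrow> inert_plus i \<Longrightarrow> uinert (app_es p x i)"
| "uinert p \<Longrightarrow> x \<notin> pdom p \<Longrightarrow> x \<in> nvp p \<Longrightarrow> inert i \<Longrightarrow> uinert (app_es p x i)"
| "uinert p \<Longrightarrow> x \<notin> pdom p \<Longrightarrow> x \<in> unp p \<Longrightarrow> x \<notin> anp p \<Longrightarrow> is_val v \<Longrightarrow>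
     uinert (app_es p x v)"
| "uinert p \<Longrightarrow> x \<notin> pdom p \<Longrightarrow> x \<notin> nvp p \<Longrightarrow> uinert (app_es p x t)"

definition unorm :: "prog \<Rightarrow> bool" where
  "unorm p \<longleftrightarrow> uinert p \<or> uabs p \<or> (\<exists>x. gvar x p)"

end

theory Submission
  imports Defs
begin

fun is_redex :: "trm \<Rightarrow> bool" where
  "is_redex (App (Lam x t) u) = True" | "is_redex _ = False"

lemma plugP_appP[simp]: "plugP (appP P x u) q = app_es (plugP P q) x u"
  by (cases P; cases q) (auto simp: app_es_def)

lemma plugP_appC[simp]: "plugP (appC p x H) (s, []) = app_es p x (plugC H s)"
  by (cases p) (auto simp: app_es_def appC_def)

lemma pdom_plug[simp]: "pdom (plugP P (s, [])) = cdom P"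
  by (cases P) (auto simp: pdom_def)

lemma pdom_app_es[simp]: "pdom (app_es p x u) = insert x (pdom p)"
  by (auto simp: pdom_def app_es_def)

lemma pdom_nil[simp]: "pdom (t, []) = {}"
  by (simp add: pdom_def)

lemma app_es_eq[simp]: "app_es p x u = app_es p' x' u' \<longleftrightarrow> p = p' \<and> x = x' \<and> u = u'"
  by (cases p; cases p') (auto simp: app_es_def)

lemma app_es_nil[simp]: "app_es p x u \<noteq> (t, [])"
  by (auto simp: app_es_def)

lemma lookupP_appP[simp]: "lookupP (appP P x u) w =
   (case lookupP P w of None \<Rightarrow> (if w = x then Some u else None) | Some v \<Rightarrow> Some v)"
  by (cases P) (auto simp: map_add_def split: option.split)

lemma lookupP_appC[simp]: "lookupP (appC p x H) w = None"
  by (simp add: appC_def)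

lemma lookupP_cdom: "lookupP P w \<noteq> None \<Longrightarrow> w \<in> cdom P"
  by (cases P) (auto simp: map_of_eq_None_iff)

lemma lookupP_None: "w \<notin> cdom P \<Longrightarrow> lookupP P w = None"
  using lookupP_cdom by blast

lemma nvp_app[simp]: "nvp (app_es p x u) = (if x \<notin> nvp p then nvp p else (nvp p - {x}) \<union> nv u)"
  by (simp add: nvp_def app_es_def)

lemma anp_app[simp]: "anp (app_es p x u) = (if x \<notin> nvp p then anp p
      else if x \<notin> anp p \<or> \<not> is_var u then (anp p - {x}) \<union> an u
      else (case u of Var y \<Rightarrow> (anp p - {x}) \<union> {y} | _ \<Rightarrow> {}))"
  by (simp add: anp_def nvp_def app_es_def split: trm.split)

lemma unp_app[simp]: "unp (app_es p x u) = (if x \<notin> unp p \<and> (x \<notin> nvp p \<or> is_var u) then unp p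
      else (unp p - {x}) \<union> un u)"
  by (simp add: unp_def nvp_def app_es_def)

lemma nvp_nil[simp]: "nvp (t, []) = nv t" by (simp add: nvp_def)
lemma anp_nil[simp]: "anp (t, []) = an t" by (simp add: anp_def)
lemma unp_nil[simp]: "unp (t, []) = un t" by (simp add: unp_def)

lemma un_an_nv: "un t \<union> an t = nv t"
proof (induction t)
  case (App t1 t2) then show ?case by (cases t1) auto
qed auto

lemma an_nv: "an t \<subseteq> nv t" using un_an_nv by blast
lemma un_nv: "un t \<subseteq> nv t" using un_an_nv by blast

lemma nv_r_un_an: "nv_r t R = un_r t R \<union> an_r t R"
proof (induction R)
  case Nil then show ?case using un_an_nv by simp
next
  case (Cons a R)
  obtain x u where a: "a = (x,u)" by fastforce
  show ?case using Cons un_an_nv[of u] unfolding a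
    by (cases u) (auto split: if_splits)
qed

lemma nvp_un_an: "nvp p = unp p \<union> anp p"
  by (simp add: nvp_def unp_def anp_def nv_r_un_an)

lemma anp_nvp: "anp p \<subseteq> nvp p" using nvp_un_an by blast
lemma unp_nvp: "unp p \<subseteq> nvp p" using nvp_un_an by blast

lemma nvp_app_sub: "nvp p - {x} \<subseteq> nvp (app_es p x u)" by auto
lemma anp_app_sub: "anp p - {x} \<subseteq> anp (app_es p x u)" by (cases u) auto

lemma nv_plug: "w \<in> nv (plugC C (Var w))"
  by (induction C) auto

lemma ctx_an_sub: "ctx_an C \<subseteq> an (plugC C s)"
proof (induction C)
  case (CAppL C t) then show ?case by (cases "plugC C s") auto
next
  case (CAppR t C) then show ?case by (cases t) auto
qed auto

lemma ctx_un_sub: "ctx_un C \<subseteq> nv (plugC C s)"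
proof (induction C)
  case (CAppR t C) then show ?case using un_nv[of t] by auto
qed auto

lemma isHa_isH: "isHa H \<Longrightarrow> isH H"
  by (induction rule: isHa.induct) (auto intro: isH.intros)

lemma isHa_App: "isHa H \<Longrightarrow> \<exists>a b. plugC H s = App a b"
  by (induction rule: isHa.induct) auto

lemma isHa_an: "isHa H \<Longrightarrow> w \<in> an (plugC H (Var w))"
proof (induction rule: isHa.induct)
  case (2 H t) then show ?case using isHa_App[OF 2(1), of "Var w"] by auto
next
  case (3 i H) then show ?case by (cases i) auto
qed auto

lemma inert_App_iff: "inert (App a b) \<longleftrightarrow> inert a \<and> (is_val b \<or> inert b)"
  by (auto elim: inert.cases intro: inert.intros)

lemma inert_Lam[simp]: "\<not> inert (Lam x t)"
  by (auto elim: inert.cases)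

lemma fb_noredex: "fireball (plugC C s) \<Longrightarrow> \<not> is_redex s"
proof (induction C)
  case Hole then show ?case
    by (cases s rule: is_redex.cases) (auto simp: fireball_def inert_App_iff)
next
  case (CAppL C t) then show ?case
    by (auto simp: fireball_def inert_App_iff)
next
  case (CAppR t C) then show ?case
    by (auto simp: fireball_def inert_App_iff)
qed

lemma nonfb_redex: "\<not> fireball t \<Longrightarrow> \<exists>H r. isH H \<and> plugC H r = t \<and> is_redex r"
proof (induction t)
  case (Var x) then show ?case by (simp add: fireball_def inert.intros)
next
  case (Lam x t) then show ?case by (simp add: fireball_def)
next
  case (App t1 t2)
  show ?case
  proof (cases "fireball t1")
    case False
    then obtain H r where "isH H" "plugC H r = t1" "is_redex r" using App by blast
    then show ?thesis by (intro exI[of _ "CAppL H t2"] exI[of _ r]) (auto intro: isH.intros)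
  next
    case True
    show ?thesis
    proof (cases "is_val t1")
      case True
      then obtain y b where "t1 = Lam y b" by (cases t1) auto
      then show ?thesis by (intro exI[of _ Hole] exI[of _ "App t1 t2"]) (auto intro: isH.intros)
    next
      case False
      with True have i: "inert t1" by (simp add: fireball_def)
      have "\<not> fireball t2" using App.prems i by (auto simp: fireball_def inert_App_iff)
      then obtain H r where "isH H" "plugC H r = t2" "is_redex r" using App by blast
      then show ?thesis using i by (intro exI[of _ "CAppR t1 H"] exI[of _ r]) (auto intro: isH.intros)
    qed
  qed
qed

lemma inert_cases: "inert u \<Longrightarrow> is_var u \<or> inert_plus u"
  by (auto simp: inert_plus_def)

lemma val_nv: "is_val v \<Longrightarrow> nv v = {}" by (cases v) auto
lemma val_an: "is_val v \<Longrightarrow> an v = {}" by (cases v) auto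
lemma val_un: "is_val v \<Longrightarrow> un v = {}" by (cases v) auto


lemma inert_lemma_M: "inert i \<Longrightarrow> x \<in> nv i \<Longrightarrow>
   \<exists>H. isH H \<and> plugC H (Var x) = i \<and> x \<notin> ctx_un H \<union> ctx_an H"
proof (induction i)
  case (Var y) then show ?case by (intro exI[of _ Hole]) (auto intro: isH.intros)
next
  case (Lam y t) then show ?case by simp
next
  case (App i f)
  have i: "inert i" and f: "is_val f \<or> inert f" using App.prems(1) by (auto simp: inert_App_iff)
  show ?case
  proof (cases "x \<in> nv i")
    case True
    then obtain H where "isH H" "plugC H (Var x) = i" "x \<notin> ctx_un H \<union> ctx_an H" using App.IH(1) i by blast
    then show ?thesis by (intro exI[of _ "CAppL H f"]) (auto intro: isH.intros)
  next
    case False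
    then have "x \<in> nv f" using App.prems by auto
    then have "inert f" using f val_nv by auto
    then obtain H where "isH H" "plugC H (Var x) = f" "x \<notin> ctx_un H \<union> ctx_an H" using App.IH(2) \<open>x \<in> nv f\<close> by blast
    then show ?thesis using False i un_an_nv[of i]
      by (intro exI[of _ "CAppR i H"]) (auto intro: isH.intros)
  qed
qed

lemma inert_lemma_X: "inert i \<Longrightarrow> S \<inter> an i \<noteq> {} \<Longrightarrow>
   \<exists>x\<in>S. \<exists>H. isHa H \<and> plugC H (Var x) = i \<and> S \<inter> ctx_an H = {}"
proof (induction i)
  case (Var y) then show ?case by simp
next
  case (Lam y t) then show ?case by simp
next
  case (App i f)
  have i: "inert i" and f: "is_val f \<or> inert f" using App.prems(1) by (auto simp: inert_App_iff)
  show ?case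
  proof (cases "\<exists>y. i = Var y")
    case True
    then obtain y where y: "i = Var y" by blast
    show ?thesis
    proof (cases "y \<in> S")
      case True
      then show ?thesis using y by (intro bexI[of _ y] exI[of _ "CAppL Hole f"]) (auto intro: isHa.intros)
    next
      case False
      then have "S \<inter> an f \<noteq> {}" using App.prems y by auto
      then have "inert f" using f val_an by auto
      then obtain x H where "x \<in> S" "isHa H" "plugC H (Var x) = f" "S \<inter> ctx_an H = {}"
        using App.IH(2) \<open>S \<inter> an f \<noteq> {}\<close> by blast
      then show ?thesis using y i by (intro bexI[of _ x] exI[of _ "CAppR i H"]) (auto intro: isHa.intros)
    qed
  next
    case False
    then have an: "an (App i f) = an i \<union> an f" by (cases i) auto
    show ?thesis
    proof (cases "S \<inter> an i \<noteq> {}")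
      case True
      then obtain x H where "x \<in> S" "isHa H" "plugC H (Var x) = i" "S \<inter> ctx_an H = {}"
        using App.IH(1) i by blast
      then show ?thesis by (intro bexI[of _ x] exI[of _ "CAppL H f"]) (auto intro: isHa.intros)
    next
      case False
      then have "S \<inter> an f \<noteq> {}" using App.prems an by auto
      then have "inert f" using f val_an by auto
      then obtain x H where "x \<in> S" "isHa H" "plugC H (Var x) = f" "S \<inter> ctx_an H = {}"
        using App.IH(2) \<open>S \<inter> an f \<noteq> {}\<close> by blast
      then show ?thesis using False i by (intro bexI[of _ x] exI[of _ "CAppR i H"]) (auto intro: isHa.intros)
    qed
  qed
qed

lemma H_lemma_M: "isH H \<Longrightarrow> x \<in> ctx_un H \<union> ctx_an H \<Longrightarrow>
  \<exists>H2. isH H2 \<and> plugC H2 (Var x) = plugC H s \<and> x \<notin> ctx_un H2 \<union> ctx_an H2 \<and>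
       ctx_un H2 \<subseteq> ctx_un H \<union> ctx_an H \<and> ctx_an H2 \<subseteq> ctx_an H"
proof (induction rule: isH.induct)
  case 1 then show ?case by simp
next
  case (2 H t)
  then obtain H2 where "isH H2 \<and> plugC H2 (Var x) = plugC H s \<and> x \<notin> ctx_un H2 \<union> ctx_an H2 \<and>
       ctx_un H2 \<subseteq> ctx_un H \<union> ctx_an H \<and> ctx_an H2 \<subseteq> ctx_an H" by auto
  then show ?case by (intro exI[of _ "CAppL H2 t"]) (auto intro: isH.intros)
next
  case (3 i H)
  show ?case
  proof (cases "x \<in> nv i")
    case True
    then obtain H3 where H3: "isH H3" "plugC H3 (Var x) = i" "x \<notin> ctx_un H3 \<union> ctx_an H3"
      using inert_lemma_M[OF 3(1) True] by blast
    have "ctx_un H3 \<subseteq> nv i" "ctx_an H3 \<subseteq> an i" using ctx_un_sub[of H3 "Var x"] ctx_an_sub[of H3 "Var x"] H3 by auto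
    then show ?thesis using H3 un_an_nv[of i]
      by (intro exI[of _ "CAppL H3 (plugC H s)"]) (auto intro: isH.intros)
  next
    case False
    then have "x \<in> ctx_un H \<union> ctx_an H" using 3(4) un_an_nv[of i] by auto
    then obtain H2 where "isH H2 \<and> plugC H2 (Var x) = plugC H s \<and> x \<notin> ctx_un H2 \<union> ctx_an H2 \<and>
       ctx_un H2 \<subseteq> ctx_un H \<union> ctx_an H \<and> ctx_an H2 \<subseteq> ctx_an H" using 3(3) by blast
    then show ?thesis using False 3(1) un_an_nv[of i]
      by (intro exI[of _ "CAppR i H2"]) (auto intro: isH.intros)
  qed
qed

lemma H_lemma_X: "isH H \<Longrightarrow> S \<subseteq> ctx_an H \<Longrightarrow> S \<noteq> {} \<Longrightarrow>
  \<exists>x\<in>S. \<exists>H2. isHa H2 \<and> plugC H2 (Var x) = plugC H s \<and> S \<inter> ctx_an H2 = {} \<and>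
       ctx_un H2 \<subseteq> ctx_un H \<union> ctx_an H \<and> ctx_an H2 \<subseteq> ctx_an H"
proof (induction rule: isH.induct)
  case 1 then show ?case by simp
next
  case (2 H t)
  then obtain x H2 where "x \<in> S" "isHa H2 \<and> plugC H2 (Var x) = plugC H s \<and> S \<inter> ctx_an H2 = {} \<and>
       ctx_un H2 \<subseteq> ctx_un H \<union> ctx_an H \<and> ctx_an H2 \<subseteq> ctx_an H" by auto
  then show ?case by (intro bexI[of _ x] exI[of _ "CAppL H2 t"]) (auto intro: isHa.intros)
next
  case (3 i H)
  show ?case
  proof (cases "S \<inter> an i \<noteq> {}")
    case True
    then obtain x H3 where H3: "x \<in> S" "isHa H3" "plugC H3 (Var x) = i" "S \<inter> ctx_an H3 = {}"
      using inert_lemma_X[OF 3(1) True] by blast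
    have "ctx_un H3 \<subseteq> nv i" "ctx_an H3 \<subseteq> an i" using ctx_un_sub[of H3 "Var x"] ctx_an_sub[of H3 "Var x"] H3 by auto
    then show ?thesis using H3 un_an_nv[of i]
      by (intro bexI[of _ x] exI[of _ "CAppL H3 (plugC H s)"]) (auto intro: isHa.intros)
  next
    case False
    then have "S \<subseteq> ctx_an H" using 3(4) by auto
    then obtain x H2 where "x \<in> S" "isHa H2 \<and> plugC H2 (Var x) = plugC H s \<and> S \<inter> ctx_an H2 = {} \<and>
       ctx_un H2 \<subseteq> ctx_un H \<union> ctx_an H \<and> ctx_an H2 \<subseteq> ctx_an H" using 3(3) 3(5) by blast
    then show ?thesis using False 3(1) un_an_nv[of i]
      by (intro bexI[of _ x] exI[of _ "CAppR i H2"]) (auto intro: isHa.intros)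
  qed
qed



lemma lemN: "isM P U A \<Longrightarrow> plugP P (Var w, []) = p \<Longrightarrow> w \<notin> pdom p \<Longrightarrow> w \<in> nvp p"
proof (induction arbitrary: w p rule: isM.induct)
  case (M_base H) then show ?case using nv_plug by auto
next
  case (M_var P U A x y) then show ?case using nvp_app_sub by fastforce
next
  case (M_gc P U A x t) then show ?case using nvp_app_sub by fastforce
next
  case (M_inert P U A x i) then show ?case using nvp_app_sub by fastforce
next
  case (M_val P U A x v) then show ?case using nvp_app_sub by fastforce
next
  case (M_hole P U A x H)
  have "x \<in> nvp (plugP P (Var x, []))" using M_hole by auto
  then show ?case using M_hole nv_plug[of w H] by auto
qed

lemma lemA: "isX P U A \<Longrightarrow> plugP P (Var w, []) = p \<Longrightarrow> w \<notin> pdom p \<Longrightarrow> w \<in> anp p"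
proof (induction arbitrary: w p rule: isX.induct)
  case (X_base H) then show ?case using isHa_an by auto
next
  case (X_fromM P U A x H)
  have "x \<in> nvp (plugP P (Var x, []))" using X_fromM lemN by auto
  moreover have "\<not> is_var (plugC H (Var w))" using isHa_App[OF X_fromM(4), of "Var w"] by auto
  ultimately show ?case using X_fromM isHa_an[OF X_fromM(4), of w] by auto
next
  case (X_var P U A x y) then show ?case using anp_app_sub by fastforce
next
  case (X_inert P U A x i) then show ?case using anp_app_sub by fastforce
next
  case (X_gc P U A x t) then show ?case using anp_app_sub by fastforce
next
  case (X_val P U A x v) then show ?case using anp_app_sub by fastforce
next
  case (X_hole P U A x)
  have x: "x \<in> anp (plugP P (Var x, []))" using X_hole by auto
  have "x \<in> nvp (plugP P (Var x, []))" using x anp_nvp by blast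
  then show ?case using X_hole.prems(1)[symmetric] x by simp
qed

lemma INV_M: "isM P U A \<Longrightarrow> plugP P (s, []) = p \<Longrightarrow> U \<subseteq> nvp p \<and> A \<subseteq> anp p"
proof (induction arbitrary: s p rule: isM.induct)
  case (M_base H) then show ?case using ctx_un_sub[of H s] ctx_an_sub[of H s] by auto
next
  case (M_var P U A x y)
  then have IH: "U \<subseteq> nvp (plugP P (s, []))" "A \<subseteq> anp (plugP P (s, []))" by auto
  have x: "x \<in> nvp (plugP P (s, []))" using IH \<open>x \<in> U \<union> A\<close> anp_nvp[of "plugP P (s, [])"] by auto
  show ?case
  proof (cases "x \<in> anp (plugP P (s, []))")
    case True then show ?thesis using M_var.hyps M_var.prems IH x by (auto simp: upd_def)
  next
    case False
    then have "x \<notin> A" using IH by blast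
    then show ?thesis using M_var.hyps M_var.prems IH x False by (auto simp: upd_def)
  qed
next
  case (M_gc P U A x t)
  then have IH: "U \<subseteq> nvp (plugP P (s, []))" "A \<subseteq> anp (plugP P (s, []))" by auto
  then show ?case using IH M_gc.hyps M_gc.prems nvp_app_sub[of "plugP P (s, [])" x t] anp_app_sub[of "plugP P (s, [])" x t] by auto
next
  case (M_inert P U A x i)
  then have IH: "U \<subseteq> nvp (plugP P (s, []))" "A \<subseteq> anp (plugP P (s, []))" by auto
  have "\<not> is_var i" using M_inert by (auto simp: inert_plus_def)
  moreover have "x \<in> nvp (plugP P (s, []))" using IH \<open>x \<in> U \<union> A\<close> anp_nvp[of "plugP P (s, [])"] by auto
  ultimately show ?case using M_inert.hyps M_inert.prems IH un_nv[of i] by auto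
next
  case (M_val P U A x v)
  then have IH: "U \<subseteq> nvp (plugP P (s, []))" "A \<subseteq> anp (plugP P (s, []))" by auto
  then show ?case using IH M_val.hyps M_val.prems nvp_app_sub[of "plugP P (s, [])" x v] anp_app_sub[of "plugP P (s, [])" x v] by auto
next
  case (M_hole P U A x H)
  let ?p0 = "plugP P (Var x, [])"
  have IH: "U \<subseteq> nvp ?p0" "A \<subseteq> anp ?p0" using M_hole by auto
  have x: "x \<in> nvp ?p0" using lemN M_hole by auto
  have a: "ctx_an H \<subseteq> an (plugC H s)" "ctx_un H \<subseteq> nv (plugC H s)" using ctx_an_sub ctx_un_sub by auto
  show ?case
  proof (cases "x \<notin> anp ?p0 \<or> \<not> is_var (plugC H s)")
    case True then show ?thesis using M_hole.hyps M_hole.prems IH x a by auto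
  next
    case False
    then obtain z where z: "plugC H s = Var z" by (cases "plugC H s") auto
    then show ?thesis using M_hole.hyps M_hole.prems IH x a False by auto
  qed
qed

lemma INV_X: "isX P U A \<Longrightarrow> plugP P (s, []) = p \<Longrightarrow> U \<subseteq> nvp p \<and> A \<subseteq> anp p"
proof (induction arbitrary: s p rule: isX.induct)
  case (X_base H) then show ?case using ctx_un_sub[of H s] ctx_an_sub[of H s] by auto
next
  case (X_fromM P U A x H)
  let ?p0 = "plugP P (Var x, [])"
  have IH: "U \<subseteq> nvp ?p0" "A \<subseteq> anp ?p0" using INV_M[OF \<open>isM P U A\<close> refl] by auto
  have x: "x \<in> nvp ?p0" using lemN[OF \<open>isM P U A\<close> refl] \<open>x \<notin> cdom P\<close> by simp
  have a: "ctx_an H \<subseteq> an (plugC H s)" "ctx_un H \<subseteq> nv (plugC H s)" using ctx_an_sub ctx_un_sub by auto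
  have "\<not> is_var (plugC H s)" using isHa_App[OF X_fromM(4), of s] by auto
  then show ?case using X_fromM.hyps X_fromM.prems IH x a by auto
next
  case (X_var P U A x y)
  then have IH: "U \<subseteq> nvp (plugP P (s, []))" "A \<subseteq> anp (plugP P (s, []))" by auto
  have x: "x \<in> nvp (plugP P (s, []))" using IH \<open>x \<in> U \<union> A\<close> anp_nvp[of "plugP P (s, [])"] by auto
  show ?case
  proof (cases "x \<in> anp (plugP P (s, []))")
    case True then show ?thesis using X_var.hyps X_var.prems IH x by (auto simp: upd_def)
  next
    case False
    then have "x \<notin> A" using IH by blast
    then show ?thesis using X_var.hyps X_var.prems IH x False by (auto simp: upd_def)
  qed
next
  case (X_gc P U A x t)
  then have IH: "U \<subseteq> nvp (plugP P (s, []))" "A \<subseteq> anp (plugP P (s, []))" by auto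
  then show ?case using IH X_gc.hyps X_gc.prems nvp_app_sub[of "plugP P (s, [])" x t] anp_app_sub[of "plugP P (s, [])" x t] by auto
next
  case (X_inert P U A x i)
  then have IH: "U \<subseteq> nvp (plugP P (s, []))" "A \<subseteq> anp (plugP P (s, []))" by auto
  have "\<not> is_var i" using X_inert by (auto simp: inert_plus_def)
  moreover have "x \<in> nvp (plugP P (s, []))" using IH \<open>x \<in> U \<union> A\<close> anp_nvp[of "plugP P (s, [])"] by auto
  ultimately show ?case using X_inert.hyps X_inert.prems IH un_nv[of i] by auto
next
  case (X_val P U A x v)
  then have IH: "U \<subseteq> nvp (plugP P (s, []))" "A \<subseteq> anp (plugP P (s, []))" by auto
  then show ?case using IH X_val.hyps X_val.prems nvp_app_sub[of "plugP P (s, [])" x v] anp_app_sub[of "plugP P (s, [])" x v] by auto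
next
  case (X_hole P U A x)
  let ?p0 = "plugP P (Var x, [])"
  have IH: "U \<subseteq> nvp ?p0" "A \<subseteq> anp ?p0" using X_hole by auto
  have "x \<in> anp ?p0" using lemA[OF \<open>isX P U A\<close> refl] \<open>x \<notin> cdom P\<close> by simp
  then have x: "x \<in> nvp ?p0" using anp_nvp by blast
  show ?case using X_hole.hyps X_hole.prems IH x nvp_app_sub[of ?p0 x s] anp_app_sub[of ?p0 x s] by auto
qed




definition goodM :: "prog \<Rightarrow> var \<Rightarrow> var set \<Rightarrow> var set \<Rightarrow> bool" where
  "goodM p x U A \<longleftrightarrow> (\<exists>P2 U2 A2. isM P2 U2 A2 \<and> plugP P2 (Var x, []) = p \<and> x \<notin> U2 \<union> A2 \<and>
      U2 \<subseteq> U \<union> A \<and> A2 \<subseteq> A)"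

lemma goodM_I: "isM P2 U2 A2 \<Longrightarrow> plugP P2 (Var x, []) = p \<Longrightarrow> x \<notin> U2 \<union> A2 \<Longrightarrow>
    U2 \<subseteq> U \<union> A \<Longrightarrow> A2 \<subseteq> A \<Longrightarrow> goodM p x U A"
  unfolding goodM_def by blast

lemma goodM_E: "goodM p x U A \<Longrightarrow> (\<And>P2 U2 A2. isM P2 U2 A2 \<Longrightarrow> plugP P2 (Var x, []) = p \<Longrightarrow>
    x \<notin> U2 \<union> A2 \<Longrightarrow> U2 \<subseteq> U \<union> A \<Longrightarrow> A2 \<subseteq> A \<Longrightarrow> thesis) \<Longrightarrow> thesis"
  unfolding goodM_def by blast

lemma cdom_eq: "plugP P (s, []) = p \<Longrightarrow> cdom P = pdom p"
  by auto

lemma len_app_es: "length (snd (app_es p x u)) = Suc (length (snd p))"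
  by (simp add: app_es_def)

lemma L1: "isM P U A \<Longrightarrow> plugP P (s, []) = p \<Longrightarrow> x \<in> U \<union> A \<Longrightarrow> x \<notin> pdom p \<Longrightarrow> goodM p x U A"
proof (induction "length (snd p)" arbitrary: P U A s x p rule: less_induct)
  case less
  from less.prems(1) show ?case
  proof (cases rule: isM.cases)
    case (M_base H)
    have "x \<in> ctx_un H \<union> ctx_an H" using less.prems(3) M_base by simp
    then obtain H2 where H2: "isH H2" "plugC H2 (Var x) = plugC H s" "x \<notin> ctx_un H2 \<union> ctx_an H2"
       "ctx_un H2 \<subseteq> ctx_un H \<union> ctx_an H" "ctx_an H2 \<subseteq> ctx_an H"
      using H_lemma_M[OF \<open>isH H\<close>] by blast
    show ?thesis
      by (rule goodM_I[OF isM.M_base[OF H2(1)]]) (use H2 M_base less.prems(2) in auto)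
  next
    case (M_var P0 U0 A0 y z)
    define p0 where "p0 = plugP P0 (s, [])"
    have p: "p = app_es p0 y (Var z)" using less.prems(2) M_var p0_def by simp
    have len: "length (snd p0) < length (snd p)" using p by (simp add: len_app_es)
    note IH = less.hyps[OF len]
    have xy: "x \<noteq> y" "x \<notin> pdom p0" using less.prems(4) p by auto
    have y0: "y \<notin> pdom p0" using M_var p0_def by simp
    have U: "U = upd U0 y z" and A: "A = upd A0 y z" using M_var by auto
    show ?thesis
    proof (cases "x \<in> U0 \<union> A0")
      case True
      obtain P2 U2 A2 where P2: "isM P2 U2 A2" "plugP P2 (Var x, []) = p0" "x \<notin> U2 \<union> A2"
          "U2 \<subseteq> U0 \<union> A0" "A2 \<subseteq> A0"
        using IH[OF \<open>isM P0 U0 A0\<close> p0_def[symmetric] True xy(2)] unfolding goodM_def by blast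
      have y2: "y \<notin> cdom P2" using P2(2) y0 by auto
      show ?thesis
      proof (cases "y \<in> U2 \<union> A2")
        case False
        show ?thesis
          by (rule goodM_I[OF isM.M_gc[OF P2(1) y2 False]]) (use P2 p U A False in \<open>auto simp: upd_def\<close>)
      next
        case True
        show ?thesis
        proof (cases "z = x")
          case False
          show ?thesis
            by (rule goodM_I[OF isM.M_var[OF P2(1) y2 True]]) (use P2 p U A False True \<open>y \<in> U0 \<union> A0\<close> in \<open>auto simp: upd_def\<close>)
        next
          case zx: True
          obtain P3 U3 A3 where P3: "isM P3 U3 A3" "plugP P3 (Var y, []) = p0" "y \<notin> U3 \<union> A3"
              "U3 \<subseteq> U2 \<union> A2" "A3 \<subseteq> A2"
            using IH[OF P2(1) P2(2) True y0] unfolding goodM_def by blast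
          have y3: "y \<notin> cdom P3" using P3(2) y0 by auto
          show ?thesis
            by (rule goodM_I[OF isM.M_hole[OF P3(1) y3 P3(3) isH.intros(1)]])
               (use P2 P3 p U A zx in \<open>auto simp: upd_def\<close>)
        qed
      qed
    next
      case False
      then have zx: "z = x" and yin: "y \<in> U0 \<union> A0" using less.prems(3) U A by (auto simp: upd_def split: if_splits)
      obtain P3 U3 A3 where P3: "isM P3 U3 A3" "plugP P3 (Var y, []) = p0" "y \<notin> U3 \<union> A3"
          "U3 \<subseteq> U0 \<union> A0" "A3 \<subseteq> A0"
        using IH[OF \<open>isM P0 U0 A0\<close> p0_def[symmetric] yin y0] unfolding goodM_def by blast
      have y3: "y \<notin> cdom P3" using P3(2) y0 by auto
      show ?thesis
        by (rule goodM_I[OF isM.M_hole[OF P3(1) y3 P3(3) isH.intros(1)]])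
           (use P3 p U A zx False in \<open>auto simp: upd_def\<close>)
    qed
  next
    case (M_gc P0 y t)
    define p0 where "p0 = plugP P0 (s, [])"
    have p: "p = app_es p0 y t" using less.prems(2) M_gc p0_def by simp
    have len: "length (snd p0) < length (snd p)" using p by (simp add: len_app_es)
    note IH = less.hyps[OF len]
    have xy: "x \<noteq> y" "x \<notin> pdom p0" using less.prems(4) p by auto
    have y0: "y \<notin> pdom p0" using M_gc p0_def by simp
    obtain P2 U2 A2 where P2: "isM P2 U2 A2" "plugP P2 (Var x, []) = p0" "x \<notin> U2 \<union> A2"
        "U2 \<subseteq> U \<union> A" "A2 \<subseteq> A"
      using IH[OF \<open>isM P0 U A\<close> p0_def[symmetric] _ xy(2)] less.prems(3) unfolding goodM_def by blast
    have y2: "y \<notin> cdom P2" using P2(2) y0 by auto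
    have y2': "y \<notin> U2 \<union> A2" using P2 \<open>y \<notin> U \<union> A\<close> by auto
    show ?thesis
      by (rule goodM_I[OF isM.M_gc[OF P2(1) y2 y2']]) (use P2 p in auto)
  next
    case (M_inert P0 U0 A0 y i)
    define p0 where "p0 = plugP P0 (s, [])"
    have p: "p = app_es p0 y i" using less.prems(2) M_inert p0_def by simp
    have len: "length (snd p0) < length (snd p)" using p by (simp add: len_app_es)
    note IH = less.hyps[OF len]
    have xy: "x \<noteq> y" "x \<notin> pdom p0" using less.prems(4) p by auto
    have y0: "y \<notin> pdom p0" using M_inert p0_def by simp
    have U: "U = (U0 - {y}) \<union> un i" and A: "A = (A0 - {y}) \<union> an i" using M_inert by auto
    have ii: "inert i" using \<open>inert_plus i\<close> by (simp add: inert_plus_def)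
    have nvi: "nv i = un i \<union> an i" using un_an_nv by auto
    have hole_case: "goodM p x U A" if P3: "isM P3 U3 A3" "plugP P3 (Var y, []) = p0" "y \<notin> U3 \<union> A3"
          "U3 \<subseteq> U0 \<union> A0" "A3 \<subseteq> A0" "x \<notin> U3 \<union> A3" and xi: "x \<in> nv i" for P3 U3 A3
    proof -
      obtain H where H: "isH H" "plugC H (Var x) = i" "x \<notin> ctx_un H \<union> ctx_an H"
        using inert_lemma_M[OF ii xi] by blast
      have b: "ctx_un H \<subseteq> nv i" "ctx_an H \<subseteq> an i" using ctx_un_sub[of H "Var x"] ctx_an_sub[of H "Var x"] H(2) by auto
      have y3: "y \<notin> cdom P3" using P3(2) y0 by auto
      show ?thesis
        by (rule goodM_I[OF isM.M_hole[OF P3(1) y3 P3(3) H(1)]]) (use P3 H b p U A nvi in auto)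
    qed
    show ?thesis
    proof (cases "x \<in> U0 \<union> A0")
      case True
      obtain P2 U2 A2 where P2: "isM P2 U2 A2" "plugP P2 (Var x, []) = p0" "x \<notin> U2 \<union> A2"
          "U2 \<subseteq> U0 \<union> A0" "A2 \<subseteq> A0"
        using IH[OF \<open>isM P0 U0 A0\<close> p0_def[symmetric] True xy(2)] unfolding goodM_def by blast
      have y2: "y \<notin> cdom P2" using P2(2) y0 by auto
      show ?thesis
      proof (cases "y \<in> U2 \<union> A2")
        case False
        show ?thesis
          by (rule goodM_I[OF isM.M_gc[OF P2(1) y2 False]]) (use P2 p U A False in auto)
      next
        case True
        show ?thesis
        proof (cases "x \<in> nv i")
          case False
          show ?thesis
            by (rule goodM_I[OF isM.M_inert[OF P2(1) y2 True \<open>inert_plus i\<close>]]) (use P2 p U A False nvi in auto)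
        next
          case xi: True
          obtain P3 U3 A3 where P3: "isM P3 U3 A3" "plugP P3 (Var y, []) = p0" "y \<notin> U3 \<union> A3"
              "U3 \<subseteq> U2 \<union> A2" "A3 \<subseteq> A2"
            using IH[OF P2(1) P2(2) True y0] unfolding goodM_def by blast
          show ?thesis
            by (rule hole_case[OF P3(1) P3(2) P3(3) _ _ _ xi]) (use P2 P3 in auto)
        qed
      qed
    next
      case False
      then have xi: "x \<in> nv i" using less.prems(3) U A nvi by auto
      obtain P3 U3 A3 where P3: "isM P3 U3 A3" "plugP P3 (Var y, []) = p0" "y \<notin> U3 \<union> A3"
          "U3 \<subseteq> U0 \<union> A0" "A3 \<subseteq> A0"
        using IH[OF \<open>isM P0 U0 A0\<close> p0_def[symmetric] \<open>y \<in> U0 \<union> A0\<close> y0] unfolding goodM_def by blast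
      show ?thesis
        by (rule hole_case[OF P3(1) P3(2) P3(3) P3(4) P3(5) _ xi]) (use P3 False in auto)
    qed
  next
    case (M_val P0 U0 y v)
    define p0 where "p0 = plugP P0 (s, [])"
    have p: "p = app_es p0 y v" using less.prems(2) M_val p0_def by simp
    have len: "length (snd p0) < length (snd p)" using p by (simp add: len_app_es)
    note IH = less.hyps[OF len]
    have xy: "x \<noteq> y" "x \<notin> pdom p0" using less.prems(4) p by auto
    have y0: "y \<notin> pdom p0" using M_val p0_def by simp
    have U: "U = U0 - {y}" using M_val by auto
    obtain P2 U2 A2 where P2: "isM P2 U2 A2" "plugP P2 (Var x, []) = p0" "x \<notin> U2 \<union> A2"
        "U2 \<subseteq> U0 \<union> A" "A2 \<subseteq> A"
      using IH[OF \<open>isM P0 U0 A\<close> p0_def[symmetric] _ xy(2)] less.prems(3) U unfolding goodM_def by blast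
    have y2: "y \<notin> cdom P2" using P2(2) y0 by auto
    show ?thesis
    proof (cases "y \<in> U2")
      case True
      have "y \<in> U2 - A2" using True P2(5) \<open>y \<in> U0 - A\<close> by auto
      show ?thesis
        by (rule goodM_I[OF isM.M_val[OF P2(1) y2 \<open>y \<in> U2 - A2\<close> \<open>is_val v\<close>]]) (use P2 p U \<open>y \<in> U0 - A\<close> in auto)
    next
      case False
      have y2': "y \<notin> U2 \<union> A2" using False P2(5) \<open>y \<in> U0 - A\<close> by auto
      show ?thesis
        by (rule goodM_I[OF isM.M_gc[OF P2(1) y2 y2']]) (use P2 p U y2' \<open>y \<in> U0 - A\<close> in auto)
    qed
  next
    case (M_hole P0 U0 A0 y H)
    define p0 where "p0 = plugP P0 (Var y, [])"
    have p: "p = app_es p0 y (plugC H s)" using less.prems(2) M_hole p0_def by simp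
    have len: "length (snd p0) < length (snd p)" using p by (simp add: len_app_es)
    note IH = less.hyps[OF len]
    have xy: "x \<noteq> y" "x \<notin> pdom p0" using less.prems(4) p by auto
    have y0: "y \<notin> pdom p0" using M_hole p0_def by simp
    have U: "U = U0 \<union> ctx_un H" and A: "A = A0 \<union> ctx_an H" using M_hole by auto
    show ?thesis
    proof (cases "x \<in> U0 \<union> A0")
      case True
      obtain P2 U2 A2 where P2: "isM P2 U2 A2" "plugP P2 (Var x, []) = p0" "x \<notin> U2 \<union> A2"
          "U2 \<subseteq> U0 \<union> A0" "A2 \<subseteq> A0"
        using IH[OF \<open>isM P0 U0 A0\<close> p0_def[symmetric] True xy(2)] unfolding goodM_def by blast
      have y2: "y \<notin> cdom P2" using P2(2) y0 by auto
      have y2': "y \<notin> U2 \<union> A2" using P2 \<open>y \<notin> U0 \<union> A0\<close> by auto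
      show ?thesis
        by (rule goodM_I[OF isM.M_gc[OF P2(1) y2 y2']]) (use P2 p U A in auto)
    next
      case False
      then have "x \<in> ctx_un H \<union> ctx_an H" using less.prems(3) U A by auto
      then obtain H2 where H2: "isH H2" "plugC H2 (Var x) = plugC H s" "x \<notin> ctx_un H2 \<union> ctx_an H2"
         "ctx_un H2 \<subseteq> ctx_un H \<union> ctx_an H" "ctx_an H2 \<subseteq> ctx_an H"
        using H_lemma_M[OF \<open>isH H\<close>] by blast
      have y0': "y \<notin> cdom P0" using y0 p0_def by simp
      show ?thesis
        by (rule goodM_I[OF isM.M_hole[OF \<open>isM P0 U0 A0\<close> y0' \<open>y \<notin> U0 \<union> A0\<close> H2(1)]])
           (use H2 p p0_def U A False in auto)
    qed
  qed
qed



definition goodX :: "prog \<Rightarrow> var set \<Rightarrow> var set \<Rightarrow> var set \<Rightarrow> bool" where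
  "goodX p S U A \<longleftrightarrow> (\<exists>x\<in>S. \<exists>Pa Ua Aa. isX Pa Ua Aa \<and> plugP Pa (Var x, []) = p \<and> S \<inter> Aa = {} \<and>
      Ua \<subseteq> U \<union> A \<and> Aa \<subseteq> A)"

lemma goodX_I: "x \<in> S \<Longrightarrow> isX Pa Ua Aa \<Longrightarrow> plugP Pa (Var x, []) = p \<Longrightarrow> S \<inter> Aa = {} \<Longrightarrow>
    Ua \<subseteq> U \<union> A \<Longrightarrow> Aa \<subseteq> A \<Longrightarrow> goodX p S U A"
  unfolding goodX_def by blast

lemma L2: "isM P U A \<Longrightarrow> plugP P (s, []) = p \<Longrightarrow> S \<subseteq> A \<Longrightarrow> S \<noteq> {} \<Longrightarrow> S \<inter> pdom p = {} \<Longrightarrow>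
   goodX p S U A"
proof (induction "length (snd p)" arbitrary: P U A s S p rule: less_induct)
  case less
  from less.prems(1) show ?case
  proof (cases rule: isM.cases)
    case (M_base H)
    have "S \<subseteq> ctx_an H" using less.prems(3) M_base by simp
    then obtain x H2 where H2: "x \<in> S" "isHa H2" "plugC H2 (Var x) = plugC H s" "S \<inter> ctx_an H2 = {}"
       "ctx_un H2 \<subseteq> ctx_un H \<union> ctx_an H" "ctx_an H2 \<subseteq> ctx_an H"
      using H_lemma_X[OF \<open>isH H\<close> _ less.prems(4)] by blast
    show ?thesis
      by (rule goodX_I[OF H2(1) isX.X_base[OF H2(2)]]) (use H2 M_base less.prems(2) in auto)
  next
    case (M_var P0 U0 A0 y z)
    define p0 where "p0 = plugP P0 (s, [])"
    have p: "p = app_es p0 y (Var z)" using less.prems(2) M_var p0_def by simp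
    have len: "length (snd p0) < length (snd p)" using p by (simp add: len_app_es)
    note IH = less.hyps[OF len]
    have y0: "y \<notin> pdom p0" using M_var p0_def by simp
    have yS: "y \<notin> S" and S0p: "S \<inter> pdom p0 = {}" using less.prems(5) p by auto
    have U: "U = upd U0 y z" and A: "A = upd A0 y z" using M_var by auto
    define S0 where "S0 = {u \<in> A0. u \<in> S \<or> (u = y \<and> z \<in> S)}"
    have S0A: "S0 \<subseteq> A0" using S0_def by auto
    have S0ne: "S0 \<noteq> {}"
    proof -
      obtain w where w: "w \<in> S" using less.prems(4) by blast
      then have "w \<in> upd A0 y z" using less.prems(3) A by auto
      then show ?thesis using w yS unfolding S0_def upd_def by (auto split: if_splits)
    qed
    have S0d: "S0 \<inter> pdom p0 = {}" using S0p y0 S0_def by auto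
    obtain x Pa Ua Aa where Pa: "x \<in> S0" "isX Pa Ua Aa" "plugP Pa (Var x, []) = p0" "S0 \<inter> Aa = {}"
        "Ua \<subseteq> U0 \<union> A0" "Aa \<subseteq> A0"
      using IH[OF \<open>isM P0 U0 A0\<close> p0_def[symmetric] S0A S0ne S0d] unfolding goodX_def by blast
    have ya: "y \<notin> cdom Pa" using Pa(3) y0 by auto
    have SAa: "S \<inter> Aa = {}" using Pa(4) Pa(6) S0_def by auto
    show ?thesis
    proof (cases "x = y")
      case True
      have zS: "z \<in> S" using Pa(1) True yS S0_def by auto
      have yA: "y \<notin> Aa" using Pa(1) Pa(4) True by auto
      show ?thesis
        by (rule goodX_I[OF zS isX.X_hole[OF Pa(2) ya yA]])
           (use Pa p U A SAa True yA \<open>y \<in> U0 \<union> A0\<close> in \<open>auto simp: upd_def\<close>)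
    next
      case False
      have xS: "x \<in> S" using Pa(1) False S0_def by auto
      show ?thesis
      proof (cases "y \<in> Ua \<union> Aa")
        case False
        show ?thesis
          by (rule goodX_I[OF xS isX.X_gc[OF Pa(2) ya False]])
             (use Pa p U A SAa False in \<open>auto simp: upd_def\<close>)
      next
        case True
        have SAa': "S \<inter> upd Aa y z = {}"
          using SAa Pa(4) Pa(6) S0_def by (auto simp: upd_def)
        show ?thesis
          by (rule goodX_I[OF xS isX.X_var[OF Pa(2) ya True]])
             (use Pa p U A SAa' True \<open>y \<in> U0 \<union> A0\<close> in \<open>auto simp: upd_def\<close>)
      qed
    qed
  next
    case (M_gc P0 y t)
    define p0 where "p0 = plugP P0 (s, [])"
    have p: "p = app_es p0 y t" using less.prems(2) M_gc p0_def by simp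
    have len: "length (snd p0) < length (snd p)" using p by (simp add: len_app_es)
    note IH = less.hyps[OF len]
    have y0: "y \<notin> pdom p0" using M_gc p0_def by simp
    have S0p: "S \<inter> pdom p0 = {}" using less.prems(5) p by auto
    obtain x Pa Ua Aa where Pa: "x \<in> S" "isX Pa Ua Aa" "plugP Pa (Var x, []) = p0" "S \<inter> Aa = {}"
        "Ua \<subseteq> U \<union> A" "Aa \<subseteq> A"
      using IH[OF \<open>isM P0 U A\<close> p0_def[symmetric] less.prems(3) less.prems(4) S0p] unfolding goodX_def by blast
    have ya: "y \<notin> cdom Pa" using Pa(3) y0 by auto
    have ya': "y \<notin> Ua \<union> Aa" using Pa(5,6) \<open>y \<notin> U \<union> A\<close> by auto
    show ?thesis
      by (rule goodX_I[OF Pa(1) isX.X_gc[OF Pa(2) ya ya']]) (use Pa p in auto)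
  next
    case (M_inert P0 U0 A0 y i)
    define p0 where "p0 = plugP P0 (s, [])"
    have p: "p = app_es p0 y i" using less.prems(2) M_inert p0_def by simp
    have len: "length (snd p0) < length (snd p)" using p by (simp add: len_app_es)
    note IH = less.hyps[OF len]
    have y0: "y \<notin> pdom p0" using M_inert p0_def by simp
    have yS: "y \<notin> S" and S0p: "S \<inter> pdom p0 = {}" using less.prems(5) p by auto
    have U: "U = (U0 - {y}) \<union> un i" and A: "A = (A0 - {y}) \<union> an i" using M_inert by auto
    have ii: "inert i" using \<open>inert_plus i\<close> by (simp add: inert_plus_def)
    have nvi: "nv i = un i \<union> an i" using un_an_nv by auto
    show ?thesis
    proof (cases "S \<inter> an i \<noteq> {}")
      case True
      obtain P1 U1 A1 where P1: "isM P1 U1 A1" "plugP P1 (Var y, []) = p0" "y \<notin> U1 \<union> A1"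
          "U1 \<subseteq> U0 \<union> A0" "A1 \<subseteq> A0"
        using L1[OF \<open>isM P0 U0 A0\<close> p0_def[symmetric] \<open>y \<in> U0 \<union> A0\<close> y0] unfolding goodM_def by blast
      have y1: "y \<notin> cdom P1" using P1(2) y0 by auto
      show ?thesis
      proof (cases "S \<inter> A1 \<noteq> {}")
        case True
        obtain x Pa Ua Aa where Pa: "x \<in> S \<inter> A1" "isX Pa Ua Aa" "plugP Pa (Var x, []) = p0" "S \<inter> A1 \<inter> Aa = {}"
            "Ua \<subseteq> U1 \<union> A1" "Aa \<subseteq> A1"
          using IH[OF P1(1) P1(2) _ True] S0p unfolding goodX_def by blast
        have ya: "y \<notin> cdom Pa" using Pa(3) y0 by auto
        have ya': "y \<notin> Ua \<union> Aa" using Pa(5,6) P1(3) by auto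
        show ?thesis
          by (rule goodX_I[OF _ isX.X_gc[OF Pa(2) ya ya']]) (use Pa P1 p U A in auto)
      next
        case False
        obtain x Ha where Ha: "x \<in> S" "isHa Ha" "plugC Ha (Var x) = i" "S \<inter> ctx_an Ha = {}"
          using inert_lemma_X[OF ii \<open>S \<inter> an i \<noteq> {}\<close>] by blast
        have b: "ctx_un Ha \<subseteq> nv i" "ctx_an Ha \<subseteq> an i" using ctx_un_sub[of Ha "Var x"] ctx_an_sub[of Ha "Var x"] Ha(3) by auto
        show ?thesis
          by (rule goodX_I[OF Ha(1) isX.X_fromM[OF P1(1) y1 P1(3) Ha(2)]]) (use Ha P1 p U A b nvi False in auto)
      qed
    next
      case False
      then have SA0: "S \<subseteq> A0" using less.prems(3) A by auto
      obtain x Pa Ua Aa where Pa: "x \<in> S" "isX Pa Ua Aa" "plugP Pa (Var x, []) = p0" "S \<inter> Aa = {}"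
          "Ua \<subseteq> U0 \<union> A0" "Aa \<subseteq> A0"
        using IH[OF \<open>isM P0 U0 A0\<close> p0_def[symmetric] SA0 less.prems(4) S0p] unfolding goodX_def by blast
      have ya: "y \<notin> cdom Pa" using Pa(3) y0 by auto
      show ?thesis
      proof (cases "y \<in> Ua \<union> Aa")
        case False
        show ?thesis
          by (rule goodX_I[OF Pa(1) isX.X_gc[OF Pa(2) ya False]]) (use Pa p U A False in auto)
      next
        case True
        show ?thesis
          by (rule goodX_I[OF Pa(1) isX.X_inert[OF Pa(2) ya True \<open>inert_plus i\<close>]])
             (use Pa p U A \<open>\<not> S \<inter> an i \<noteq> {}\<close> in auto)
      qed
    qed
  next
    case (M_val P0 U0 y v)
    define p0 where "p0 = plugP P0 (s, [])"
    have p: "p = app_es p0 y v" using less.prems(2) M_val p0_def by simp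
    have len: "length (snd p0) < length (snd p)" using p by (simp add: len_app_es)
    note IH = less.hyps[OF len]
    have y0: "y \<notin> pdom p0" using M_val p0_def by simp
    have S0p: "S \<inter> pdom p0 = {}" using less.prems(5) p by auto
    have U: "U = U0 - {y}" using M_val by auto
    obtain x Pa Ua Aa where Pa: "x \<in> S" "isX Pa Ua Aa" "plugP Pa (Var x, []) = p0" "S \<inter> Aa = {}"
        "Ua \<subseteq> U0 \<union> A" "Aa \<subseteq> A"
      using IH[OF \<open>isM P0 U0 A\<close> p0_def[symmetric] less.prems(3) less.prems(4) S0p] unfolding goodX_def by blast
    have ya: "y \<notin> cdom Pa" using Pa(3) y0 by auto
    show ?thesis
    proof (cases "y \<in> Ua")
      case True
      have yy: "y \<in> Ua - Aa" using True Pa(6) \<open>y \<in> U0 - A\<close> by auto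
      show ?thesis
        by (rule goodX_I[OF Pa(1) isX.X_val[OF Pa(2) ya yy \<open>is_val v\<close>]]) (use Pa p U \<open>y \<in> U0 - A\<close> in auto)
    next
      case False
      have yy: "y \<notin> Ua \<union> Aa" using False Pa(6) \<open>y \<in> U0 - A\<close> by auto
      show ?thesis
        by (rule goodX_I[OF Pa(1) isX.X_gc[OF Pa(2) ya yy]]) (use Pa p U yy \<open>y \<in> U0 - A\<close> in auto)
    qed
  next
    case (M_hole P0 U0 A0 y H)
    define p0 where "p0 = plugP P0 (Var y, [])"
    have p: "p = app_es p0 y (plugC H s)" using less.prems(2) M_hole p0_def by simp
    have len: "length (snd p0) < length (snd p)" using p by (simp add: len_app_es)
    note IH = less.hyps[OF len]
    have y0: "y \<notin> pdom p0" using M_hole p0_def by simp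
    have S0p: "S \<inter> pdom p0 = {}" using less.prems(5) p by auto
    have U: "U = U0 \<union> ctx_un H" and A: "A = A0 \<union> ctx_an H" using M_hole by auto
    show ?thesis
    proof (cases "S \<inter> A0 \<noteq> {}")
      case True
      obtain x Pa Ua Aa where Pa: "x \<in> S \<inter> A0" "isX Pa Ua Aa" "plugP Pa (Var x, []) = p0" "S \<inter> A0 \<inter> Aa = {}"
          "Ua \<subseteq> U0 \<union> A0" "Aa \<subseteq> A0"
        using IH[OF \<open>isM P0 U0 A0\<close> p0_def[symmetric] _ True] S0p unfolding goodX_def by blast
      have ya: "y \<notin> cdom Pa" using Pa(3) y0 by auto
      have ya': "y \<notin> Ua \<union> Aa" using Pa(5,6) \<open>y \<notin> U0 \<union> A0\<close> by auto
      show ?thesis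
        by (rule goodX_I[OF _ isX.X_gc[OF Pa(2) ya ya']]) (use Pa p U A in auto)
    next
      case False
      then have "S \<subseteq> ctx_an H" using less.prems(3) A by auto
      then obtain x H2 where H2: "x \<in> S" "isHa H2" "plugC H2 (Var x) = plugC H s" "S \<inter> ctx_an H2 = {}"
         "ctx_un H2 \<subseteq> ctx_un H \<union> ctx_an H" "ctx_an H2 \<subseteq> ctx_an H"
        using H_lemma_X[OF \<open>isH H\<close> _ less.prems(4)] by blast
      have y0': "y \<notin> cdom P0" using y0 p0_def by simp
      show ?thesis
        by (rule goodX_I[OF H2(1) isX.X_fromM[OF \<open>isM P0 U0 A0\<close> y0' \<open>y \<notin> U0 \<union> A0\<close> H2(2)]])
           (use H2 p p0_def U A False in auto)
    qed
  qed
qed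



lemma hyp_appP: "(\<forall>v. lookupP (appP P y u) w = Some v \<longrightarrow> is_val v) \<Longrightarrow> y \<notin> cdom P \<Longrightarrow>
   (\<forall>v. lookupP P w = Some v \<longrightarrow> is_val v) \<and> (y = w \<longrightarrow> is_val u)"
proof -
  assume h: "\<forall>v. lookupP (appP P y u) w = Some v \<longrightarrow> is_val v" and y: "y \<notin> cdom P"
  have 1: "\<forall>v. lookupP P w = Some v \<longrightarrow> is_val v" using h by auto
  have "y = w \<longrightarrow> is_val u"
  proof
    assume "y = w"
    then have "lookupP P w = None" using y lookupP_None by auto
    then show "is_val u" using h \<open>y = w\<close> by auto
  qed
  then show ?thesis using 1 by blast
qed

lemma L3: "isX P U A \<Longrightarrow> plugP P (Var w, []) = p \<Longrightarrow> (\<forall>v. lookupP P w = Some v \<longrightarrow> is_val v) \<Longrightarrow>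
   x \<in> U \<union> A \<Longrightarrow> x \<notin> pdom p \<Longrightarrow> goodM p x (insert w U) A"
proof (induction arbitrary: w p x rule: isX.induct)
  case (X_base H)
  have "x \<in> ctx_un H \<union> ctx_an H" using X_base.prems(3) by simp
  then obtain H2 where H2: "isH H2" "plugC H2 (Var x) = plugC H (Var w)" "x \<notin> ctx_un H2 \<union> ctx_an H2"
     "ctx_un H2 \<subseteq> ctx_un H \<union> ctx_an H" "ctx_an H2 \<subseteq> ctx_an H"
    using H_lemma_M[OF isHa_isH[OF \<open>isHa H\<close>]] by blast
  show ?case
    by (rule goodM_I[OF isM.M_base[OF H2(1)]]) (use H2 X_base.prems(1) in auto)
next
  case (X_fromM P U A y H)
  define p0 where "p0 = plugP P (Var y, [])"
  have p: "p = app_es p0 y (plugC H (Var w))" using X_fromM.prems(1) p0_def by simp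
  have xy: "x \<noteq> y" "x \<notin> pdom p0" using X_fromM.prems(4) p by auto
  have y0: "y \<notin> pdom p0" using X_fromM.hyps(2) p0_def by simp
  show ?case
  proof (cases "x \<in> U \<union> A")
    case True
    obtain P2 U2 A2 where P2: "isM P2 U2 A2" "plugP P2 (Var x, []) = p0" "x \<notin> U2 \<union> A2"
        "U2 \<subseteq> U \<union> A" "A2 \<subseteq> A"
      using L1[OF \<open>isM P U A\<close> p0_def[symmetric] True xy(2)] unfolding goodM_def by blast
    have y2: "y \<notin> cdom P2" using P2(2) y0 by auto
    have y2': "y \<notin> U2 \<union> A2" using P2 \<open>y \<notin> U \<union> A\<close> by auto
    show ?thesis
      by (rule goodM_I[OF isM.M_gc[OF P2(1) y2 y2']]) (use P2 p \<open>y \<notin> U \<union> A\<close> in auto)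
  next
    case False
    then have "x \<in> ctx_un H \<union> ctx_an H" using X_fromM.prems(3) by auto
    then obtain H2 where H2: "isH H2" "plugC H2 (Var x) = plugC H (Var w)" "x \<notin> ctx_un H2 \<union> ctx_an H2"
       "ctx_un H2 \<subseteq> ctx_un H \<union> ctx_an H" "ctx_an H2 \<subseteq> ctx_an H"
      using H_lemma_M[OF isHa_isH[OF \<open>isHa H\<close>]] by blast
    show ?thesis
      by (rule goodM_I[OF isM.M_hole[OF \<open>isM P U A\<close> \<open>y \<notin> cdom P\<close> \<open>y \<notin> U \<union> A\<close> H2(1)]])
         (use H2 p p0_def False \<open>y \<notin> U \<union> A\<close> in auto)
  qed
next
  case (X_var P U A y z)
  define p0 where "p0 = plugP P (Var w, [])"
  have p: "p = app_es p0 y (Var z)" using X_var.prems(1) p0_def by simp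
  have xy: "x \<noteq> y" "x \<notin> pdom p0" using X_var.prems(4) p by auto
  have y0: "y \<notin> pdom p0" using X_var.hyps(2) p0_def by simp
  have hh: "(\<forall>v. lookupP P w = Some v \<longrightarrow> is_val v) \<and> (y = w \<longrightarrow> is_val (Var z))"
    using hyp_appP[OF X_var.prems(2) X_var.hyps(2)] .
  then have hP: "\<forall>v. lookupP P w = Some v \<longrightarrow> is_val v" and yw: "y \<noteq> w" by auto
  note IH = X_var.IH[OF p0_def[symmetric] hP]
  show ?case
  proof (cases "x \<in> U \<union> A")
    case True
    obtain P2 U2 A2 where P2: "isM P2 U2 A2" "plugP P2 (Var x, []) = p0" "x \<notin> U2 \<union> A2"
        "U2 \<subseteq> insert w U \<union> A" "A2 \<subseteq> A"
      using IH[OF True xy(2)] unfolding goodM_def by blast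
    have y2: "y \<notin> cdom P2" using P2(2) y0 by auto
    show ?thesis
    proof (cases "y \<in> U2 \<union> A2")
      case False
      show ?thesis
        by (rule goodM_I[OF isM.M_gc[OF P2(1) y2 False]]) (use P2 p False yw in \<open>auto simp: upd_def\<close>)
    next
      case True
      show ?thesis
      proof (cases "z = x")
        case False
        show ?thesis
          by (rule goodM_I[OF isM.M_var[OF P2(1) y2 True]])
             (use P2 p False True \<open>y \<in> U \<union> A\<close> yw in \<open>auto simp: upd_def\<close>)
      next
        case zx: True
        obtain P3 U3 A3 where P3: "isM P3 U3 A3" "plugP P3 (Var y, []) = p0" "y \<notin> U3 \<union> A3"
            "U3 \<subseteq> U2 \<union> A2" "A3 \<subseteq> A2"
          using L1[OF P2(1) P2(2) True y0] unfolding goodM_def by blast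
        have y3: "y \<notin> cdom P3" using P3(2) y0 by auto
        show ?thesis
          by (rule goodM_I[OF isM.M_hole[OF P3(1) y3 P3(3) isH.intros(1)]])
             (use P2 P3 p zx yw in \<open>auto simp: upd_def\<close>)
      qed
    qed
  next
    case False
    then have zx: "z = x" and yin: "y \<in> U \<union> A" using X_var.prems(3) by (auto simp: upd_def split: if_splits)
    obtain P3 U3 A3 where P3: "isM P3 U3 A3" "plugP P3 (Var y, []) = p0" "y \<notin> U3 \<union> A3"
        "U3 \<subseteq> insert w U \<union> A" "A3 \<subseteq> A"
      using IH[OF yin y0] unfolding goodM_def by blast
    have y3: "y \<notin> cdom P3" using P3(2) y0 by auto
    show ?thesis
    proof (cases "x \<in> U3 \<union> A3")
      case False
      show ?thesis
        by (rule goodM_I[OF isM.M_hole[OF P3(1) y3 P3(3) isH.intros(1)]])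
           (use P3 p zx False yw in \<open>auto simp: upd_def\<close>)
    next
      case True
      obtain P4 U4 A4 where P4: "isM P4 U4 A4" "plugP P4 (Var x, []) = p0" "x \<notin> U4 \<union> A4"
          "U4 \<subseteq> U3 \<union> A3" "A4 \<subseteq> A3"
        using L1[OF P3(1) P3(2) True xy(2)] unfolding goodM_def by blast
      have y4: "y \<notin> cdom P4" using P4(2) y0 by auto
      have y4': "y \<notin> U4 \<union> A4" using P4 P3(3) by auto
      show ?thesis
        by (rule goodM_I[OF isM.M_gc[OF P4(1) y4 y4']]) (use P3 P4 p yw in \<open>auto simp: upd_def\<close>)
    qed
  qed
next
  case (X_inert P U A y i)
  define p0 where "p0 = plugP P (Var w, [])"
  have p: "p = app_es p0 y i" using X_inert.prems(1) p0_def by simp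
  have xy: "x \<noteq> y" "x \<notin> pdom p0" using X_inert.prems(4) p by auto
  have y0: "y \<notin> pdom p0" using X_inert.hyps(2) p0_def by simp
  have hh: "(\<forall>v. lookupP P w = Some v \<longrightarrow> is_val v) \<and> (y = w \<longrightarrow> is_val i)"
    using hyp_appP[OF X_inert.prems(2) X_inert.hyps(2)] .
  have niv: "\<not> is_val i" using \<open>inert_plus i\<close> by (auto simp: inert_plus_def fireball_def elim: inert.cases)
  then have hP: "\<forall>v. lookupP P w = Some v \<longrightarrow> is_val v" and yw: "y \<noteq> w" using hh by auto
  note IH = X_inert.IH[OF p0_def[symmetric] hP]
  have ii: "inert i" using \<open>inert_plus i\<close> by (simp add: inert_plus_def)
  have nvi: "nv i = un i \<union> an i" using un_an_nv by auto
  have hole_case: "goodM p x (insert w ((U - {y}) \<union> un i)) ((A - {y}) \<union> an i)"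
    if P3: "isM P3 U3 A3" "plugP P3 (Var y, []) = p0" "y \<notin> U3 \<union> A3"
          "U3 \<subseteq> insert w U \<union> A" "A3 \<subseteq> A" "x \<notin> U3 \<union> A3" and xi: "x \<in> nv i" for P3 U3 A3
  proof -
    obtain H where H: "isH H" "plugC H (Var x) = i" "x \<notin> ctx_un H \<union> ctx_an H"
      using inert_lemma_M[OF ii xi] by blast
    have b: "ctx_un H \<subseteq> nv i" "ctx_an H \<subseteq> an i" using ctx_un_sub[of H "Var x"] ctx_an_sub[of H "Var x"] H(2) by auto
    have y3: "y \<notin> cdom P3" using P3(2) y0 by auto
    show ?thesis
      by (rule goodM_I[OF isM.M_hole[OF P3(1) y3 P3(3) H(1)]]) (use P3 H b p nvi in auto)
  qed
  show ?case
  proof (cases "x \<in> U \<union> A")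
    case True
    obtain P2 U2 A2 where P2: "isM P2 U2 A2" "plugP P2 (Var x, []) = p0" "x \<notin> U2 \<union> A2"
        "U2 \<subseteq> insert w U \<union> A" "A2 \<subseteq> A"
      using IH[OF True xy(2)] unfolding goodM_def by blast
    have y2: "y \<notin> cdom P2" using P2(2) y0 by auto
    show ?thesis
    proof (cases "y \<in> U2 \<union> A2")
      case False
      show ?thesis
        by (rule goodM_I[OF isM.M_gc[OF P2(1) y2 False]]) (use P2 p False in auto)
    next
      case True
      show ?thesis
      proof (cases "x \<in> nv i")
        case False
        show ?thesis
          by (rule goodM_I[OF isM.M_inert[OF P2(1) y2 True \<open>inert_plus i\<close>]]) (use P2 p False nvi in auto)
      next
        case xi: True
        obtain P3 U3 A3 where P3: "isM P3 U3 A3" "plugP P3 (Var y, []) = p0" "y \<notin> U3 \<union> A3"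
            "U3 \<subseteq> U2 \<union> A2" "A3 \<subseteq> A2"
          using L1[OF P2(1) P2(2) True y0] unfolding goodM_def by blast
        show ?thesis
          by (rule hole_case[OF P3(1) P3(2) P3(3) _ _ _ xi]) (use P2 P3 in auto)
      qed
    qed
  next
    case False
    then have xi: "x \<in> nv i" using X_inert.prems(3) nvi by auto
    obtain P3 U3 A3 where P3: "isM P3 U3 A3" "plugP P3 (Var y, []) = p0" "y \<notin> U3 \<union> A3"
        "U3 \<subseteq> insert w U \<union> A" "A3 \<subseteq> A"
      using IH[OF \<open>y \<in> U \<union> A\<close> y0] unfolding goodM_def by blast
    show ?thesis
    proof (cases "x \<in> U3 \<union> A3")
      case False
      show ?thesis by (rule hole_case[OF P3 False xi])
    next
      case True
      obtain P4 U4 A4 where P4: "isM P4 U4 A4" "plugP P4 (Var x, []) = p0" "x \<notin> U4 \<union> A4"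
          "U4 \<subseteq> U3 \<union> A3" "A4 \<subseteq> A3"
        using L1[OF P3(1) P3(2) True xy(2)] unfolding goodM_def by blast
      have y4: "y \<notin> cdom P4" using P4(2) y0 by auto
      have y4': "y \<notin> U4 \<union> A4" using P4 P3(3) by auto
      show ?thesis
        by (rule goodM_I[OF isM.M_gc[OF P4(1) y4 y4']]) (use P3 P4 p yw in auto)
    qed
  qed
next
  case (X_gc P U A y t)
  define p0 where "p0 = plugP P (Var w, [])"
  have p: "p = app_es p0 y t" using X_gc.prems(1) p0_def by simp
  have xy: "x \<noteq> y" "x \<notin> pdom p0" using X_gc.prems(4) p by auto
  have y0: "y \<notin> pdom p0" using X_gc.hyps(2) p0_def by simp
  have hh: "(\<forall>v. lookupP P w = Some v \<longrightarrow> is_val v) \<and> (y = w \<longrightarrow> is_val t)"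
    using hyp_appP[OF X_gc.prems(2) X_gc.hyps(2)] .
  then have hP: "\<forall>v. lookupP P w = Some v \<longrightarrow> is_val v" by auto
  note IH = X_gc.IH[OF p0_def[symmetric] hP]
  obtain P2 U2 A2 where P2: "isM P2 U2 A2" "plugP P2 (Var x, []) = p0" "x \<notin> U2 \<union> A2"
      "U2 \<subseteq> insert w U \<union> A" "A2 \<subseteq> A"
    using IH[OF X_gc.prems(3) xy(2)] unfolding goodM_def by blast
  have y2: "y \<notin> cdom P2" using P2(2) y0 by auto
  show ?case
  proof (cases "y \<in> U2 \<union> A2")
    case False
    show ?thesis
      by (rule goodM_I[OF isM.M_gc[OF P2(1) y2 False]]) (use P2 p False in auto)
  next
    case True
    then have yw: "y = w" and yy: "y \<in> U2 - A2" using P2(4,5) \<open>y \<notin> U \<union> A\<close> by auto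
    then have "is_val t" using hh by auto
    show ?thesis
      by (rule goodM_I[OF isM.M_val[OF P2(1) y2 yy \<open>is_val t\<close>]]) (use P2 p yw in auto)
  qed
next
  case (X_val P U A y v)
  define p0 where "p0 = plugP P (Var w, [])"
  have p: "p = app_es p0 y v" using X_val.prems(1) p0_def by simp
  have xy: "x \<noteq> y" "x \<notin> pdom p0" using X_val.prems(4) p by auto
  have y0: "y \<notin> pdom p0" using X_val.hyps(2) p0_def by simp
  have hh: "(\<forall>v'. lookupP P w = Some v' \<longrightarrow> is_val v') \<and> (y = w \<longrightarrow> is_val v)"
    using hyp_appP[OF X_val.prems(2) X_val.hyps(2)] .
  then have hP: "\<forall>v'. lookupP P w = Some v' \<longrightarrow> is_val v'" by auto
  note IH = X_val.IH[OF p0_def[symmetric] hP]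
  obtain P2 U2 A2 where P2: "isM P2 U2 A2" "plugP P2 (Var x, []) = p0" "x \<notin> U2 \<union> A2"
      "U2 \<subseteq> insert w U \<union> A" "A2 \<subseteq> A"
    using IH[OF _ xy(2)] X_val.prems(3) unfolding goodM_def by blast
  have y2: "y \<notin> cdom P2" using P2(2) y0 by auto
  show ?case
  proof (cases "y \<in> U2")
    case True
    have yy: "y \<in> U2 - A2" using True P2(5) \<open>y \<in> U - A\<close> by auto
    show ?thesis
      by (rule goodM_I[OF isM.M_val[OF P2(1) y2 yy \<open>is_val v\<close>]]) (use P2 p \<open>y \<in> U - A\<close> in auto)
  next
    case False
    have yy: "y \<notin> U2 \<union> A2" using False P2(5) \<open>y \<in> U - A\<close> by auto
    show ?thesis
      by (rule goodM_I[OF isM.M_gc[OF P2(1) y2 yy]]) (use P2 p yy \<open>y \<in> U - A\<close> in auto)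
  qed
next
  case (X_hole P U A y)
  define p0 where "p0 = plugP P (Var y, [])"
  have p: "p = app_es p0 y (Var w)" using X_hole.prems(1) p0_def by simp
  have xy: "x \<noteq> y" "x \<notin> pdom p0" using X_hole.prems(4) p by auto
  have y0: "y \<notin> pdom p0" using X_hole.hyps(2) p0_def by simp
  have hP: "\<forall>v. lookupP P y = Some v \<longrightarrow> is_val v" using lookupP_None[OF X_hole.hyps(2)] by auto
  note IH = X_hole.IH[OF p0_def[symmetric] hP]
  obtain P2 U2 A2 where P2: "isM P2 U2 A2" "plugP P2 (Var x, []) = p0" "x \<notin> U2 \<union> A2"
      "U2 \<subseteq> insert y U \<union> A" "A2 \<subseteq> A"
    using IH[OF _ xy(2)] X_hole.prems(3) unfolding goodM_def by blast
  have y2: "y \<notin> cdom P2" using P2(2) y0 by auto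
  have yA2: "y \<notin> A2" using P2(5) \<open>y \<notin> A\<close> by auto
  show ?case
  proof (cases "y \<in> U2")
    case False
    have yy: "y \<notin> U2 \<union> A2" using False yA2 by auto
    show ?thesis
      by (rule goodM_I[OF isM.M_gc[OF P2(1) y2 yy]]) (use P2 p yy in auto)
  next
    case True
    then have yy: "y \<in> U2 \<union> A2" by auto
    show ?thesis
    proof (cases "x = w")
      case False
      show ?thesis
        by (rule goodM_I[OF isM.M_var[OF P2(1) y2 yy]]) (use P2 p False yA2 in \<open>auto simp: upd_def\<close>)
    next
      case True
      obtain P3 U3 A3 where P3: "isM P3 U3 A3" "plugP P3 (Var y, []) = p0" "y \<notin> U3 \<union> A3"
          "U3 \<subseteq> U2 \<union> A2" "A3 \<subseteq> A2"
        using L1[OF P2(1) P2(2) yy y0] unfolding goodM_def by blast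
      have y3: "y \<notin> cdom P3" using P3(2) y0 by auto
      show ?thesis
        by (rule goodM_I[OF isM.M_hole[OF P3(1) y3 P3(3) isH.intros(1)]])
           (use P2 P3 p True yA2 in auto)
    qed
  qed
qed



lemma L4: "isX P U A \<Longrightarrow> plugP P (Var w, []) = p \<Longrightarrow> (\<forall>v. lookupP P w = Some v \<longrightarrow> is_val v) \<Longrightarrow>
   S \<subseteq> A \<Longrightarrow> S \<noteq> {} \<Longrightarrow> S \<inter> pdom p = {} \<Longrightarrow> goodX p S (insert w U) A"
proof (induction arbitrary: w p S rule: isX.induct)
  case (X_base H)
  have "S \<subseteq> ctx_an H" using X_base.prems(3) by simp
  then obtain x H2 where H2: "x \<in> S" "isHa H2" "plugC H2 (Var x) = plugC H (Var w)" "S \<inter> ctx_an H2 = {}"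
     "ctx_un H2 \<subseteq> ctx_un H \<union> ctx_an H" "ctx_an H2 \<subseteq> ctx_an H"
    using H_lemma_X[OF isHa_isH[OF \<open>isHa H\<close>] _ X_base.prems(4)] by blast
  show ?case
    by (rule goodX_I[OF H2(1) isX.X_base[OF H2(2)]]) (use H2 X_base.prems(1) in auto)
next
  case (X_fromM P U A y H)
  define p0 where "p0 = plugP P (Var y, [])"
  have p: "p = app_es p0 y (plugC H (Var w))" using X_fromM.prems(1) p0_def by simp
  have y0: "y \<notin> pdom p0" using X_fromM.hyps(2) p0_def by simp
  have S0p: "S \<inter> pdom p0 = {}" using X_fromM.prems(5) p by auto
  show ?case
  proof (cases "S \<inter> A \<noteq> {}")
    case True
    obtain x Pa Ua Aa where Pa: "x \<in> S \<inter> A" "isX Pa Ua Aa" "plugP Pa (Var x, []) = p0" "S \<inter> A \<inter> Aa = {}"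
        "Ua \<subseteq> U \<union> A" "Aa \<subseteq> A"
      using L2[OF \<open>isM P U A\<close> p0_def[symmetric] _ True] S0p unfolding goodX_def by blast
    have ya: "y \<notin> cdom Pa" using Pa(3) y0 by auto
    have ya': "y \<notin> Ua \<union> Aa" using Pa(5,6) \<open>y \<notin> U \<union> A\<close> by auto
    show ?thesis
      by (rule goodX_I[OF _ isX.X_gc[OF Pa(2) ya ya']]) (use Pa p \<open>y \<notin> U \<union> A\<close> in auto)
  next
    case False
    then have "S \<subseteq> ctx_an H" using X_fromM.prems(3) by auto
    then obtain x H2 where H2: "x \<in> S" "isHa H2" "plugC H2 (Var x) = plugC H (Var w)" "S \<inter> ctx_an H2 = {}"
       "ctx_un H2 \<subseteq> ctx_un H \<union> ctx_an H" "ctx_an H2 \<subseteq> ctx_an H"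
      using H_lemma_X[OF isHa_isH[OF \<open>isHa H\<close>] _ X_fromM.prems(4)] by blast
    show ?thesis
      by (rule goodX_I[OF H2(1) isX.X_fromM[OF \<open>isM P U A\<close> \<open>y \<notin> cdom P\<close> \<open>y \<notin> U \<union> A\<close> H2(2)]])
         (use H2 p p0_def False \<open>y \<notin> U \<union> A\<close> in auto)
  qed
next
  case (X_var P U A y z)
  define p0 where "p0 = plugP P (Var w, [])"
  have p: "p = app_es p0 y (Var z)" using X_var.prems(1) p0_def by simp
  have y0: "y \<notin> pdom p0" using X_var.hyps(2) p0_def by simp
  have yS: "y \<notin> S" and S0p: "S \<inter> pdom p0 = {}" using X_var.prems(5) p by auto
  have hh: "(\<forall>v. lookupP P w = Some v \<longrightarrow> is_val v) \<and> (y = w \<longrightarrow> is_val (Var z))"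
    using hyp_appP[OF X_var.prems(2) X_var.hyps(2)] .
  then have hP: "\<forall>v. lookupP P w = Some v \<longrightarrow> is_val v" and yw: "y \<noteq> w" by auto
  note IH = X_var.IH[OF p0_def[symmetric] hP]
  define S0 where "S0 = {u \<in> A. u \<in> S \<or> (u = y \<and> z \<in> S)}"
  have S0A: "S0 \<subseteq> A" using S0_def by auto
  have S0ne: "S0 \<noteq> {}"
  proof -
    obtain v where v: "v \<in> S" using X_var.prems(4) by blast
    then have "v \<in> upd A y z" using X_var.prems(3) by auto
    then show ?thesis using v yS unfolding S0_def upd_def by (auto split: if_splits)
  qed
  have S0d: "S0 \<inter> pdom p0 = {}" using S0p y0 S0_def by auto
  obtain x Pa Ua Aa where Pa: "x \<in> S0" "isX Pa Ua Aa" "plugP Pa (Var x, []) = p0" "S0 \<inter> Aa = {}"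
      "Ua \<subseteq> insert w U \<union> A" "Aa \<subseteq> A"
    using IH[OF S0A S0ne S0d] unfolding goodX_def by blast
  have ya: "y \<notin> cdom Pa" using Pa(3) y0 by auto
  have SAa: "S \<inter> Aa = {}" using Pa(4) Pa(6) S0_def by auto
  show ?case
  proof (cases "x = y")
    case True
    have zS: "z \<in> S" using Pa(1) True yS S0_def by auto
    have yA: "y \<notin> Aa" using Pa(1) Pa(4) True by auto
    show ?thesis
      by (rule goodX_I[OF zS isX.X_hole[OF Pa(2) ya yA]])
         (use Pa p SAa True yA yw \<open>y \<in> U \<union> A\<close> in \<open>auto simp: upd_def\<close>)
  next
    case False
    have xS: "x \<in> S" using Pa(1) False S0_def by auto
    show ?thesis
    proof (cases "y \<in> Ua \<union> Aa")
      case False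
      show ?thesis
        by (rule goodX_I[OF xS isX.X_gc[OF Pa(2) ya False]])
           (use Pa p SAa False yw in \<open>auto simp: upd_def\<close>)
    next
      case True
      have SAa': "S \<inter> upd Aa y z = {}"
        using SAa Pa(4) Pa(6) S0_def by (auto simp: upd_def)
      show ?thesis
        by (rule goodX_I[OF xS isX.X_var[OF Pa(2) ya True]])
           (use Pa p SAa' True yw \<open>y \<in> U \<union> A\<close> in \<open>auto simp: upd_def\<close>)
    qed
  qed
next
  case (X_inert P U A y i)
  define p0 where "p0 = plugP P (Var w, [])"
  have p: "p = app_es p0 y i" using X_inert.prems(1) p0_def by simp
  have y0: "y \<notin> pdom p0" using X_inert.hyps(2) p0_def by simp
  have yS: "y \<notin> S" and S0p: "S \<inter> pdom p0 = {}" using X_inert.prems(5) p by auto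
  have hh: "(\<forall>v. lookupP P w = Some v \<longrightarrow> is_val v) \<and> (y = w \<longrightarrow> is_val i)"
    using hyp_appP[OF X_inert.prems(2) X_inert.hyps(2)] .
  have niv: "\<not> is_val i" using \<open>inert_plus i\<close> by (auto simp: inert_plus_def fireball_def elim: inert.cases)
  then have hP: "\<forall>v. lookupP P w = Some v \<longrightarrow> is_val v" and yw: "y \<noteq> w" using hh by auto
  note IH = X_inert.IH[OF p0_def[symmetric] hP]
  have ii: "inert i" using \<open>inert_plus i\<close> by (simp add: inert_plus_def)
  have nvi: "nv i = un i \<union> an i" using un_an_nv by auto
  show ?case
  proof (cases "S \<inter> an i \<noteq> {}")
    case True
    obtain P1 U1 A1 where P1: "isM P1 U1 A1" "plugP P1 (Var y, []) = p0" "y \<notin> U1 \<union> A1"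
        "U1 \<subseteq> insert w U \<union> A" "A1 \<subseteq> A"
      using L3[OF \<open>isX P U A\<close> p0_def[symmetric] hP \<open>y \<in> U \<union> A\<close> y0] unfolding goodM_def by blast
    have y1: "y \<notin> cdom P1" using P1(2) y0 by auto
    show ?thesis
    proof (cases "S \<inter> A1 \<noteq> {}")
      case True
      obtain x Pa Ua Aa where Pa: "x \<in> S \<inter> A1" "isX Pa Ua Aa" "plugP Pa (Var x, []) = p0" "S \<inter> A1 \<inter> Aa = {}"
          "Ua \<subseteq> U1 \<union> A1" "Aa \<subseteq> A1"
        using L2[OF P1(1) P1(2) _ True] S0p unfolding goodX_def by blast
      have ya: "y \<notin> cdom Pa" using Pa(3) y0 by auto
      have ya': "y \<notin> Ua \<union> Aa" using Pa(5,6) P1(3) by auto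
      show ?thesis
        by (rule goodX_I[OF _ isX.X_gc[OF Pa(2) ya ya']]) (use Pa P1 p in auto)
    next
      case False
      obtain x Ha where Ha: "x \<in> S" "isHa Ha" "plugC Ha (Var x) = i" "S \<inter> ctx_an Ha = {}"
        using inert_lemma_X[OF ii \<open>S \<inter> an i \<noteq> {}\<close>] by blast
      have b: "ctx_un Ha \<subseteq> nv i" "ctx_an Ha \<subseteq> an i" using ctx_un_sub[of Ha "Var x"] ctx_an_sub[of Ha "Var x"] Ha(3) by auto
      show ?thesis
        by (rule goodX_I[OF Ha(1) isX.X_fromM[OF P1(1) y1 P1(3) Ha(2)]]) (use Ha P1 p b nvi False in auto)
    qed
  next
    case False
    then have SA0: "S \<subseteq> A" using X_inert.prems(3) by auto
    obtain x Pa Ua Aa where Pa: "x \<in> S" "isX Pa Ua Aa" "plugP Pa (Var x, []) = p0" "S \<inter> Aa = {}"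
        "Ua \<subseteq> insert w U \<union> A" "Aa \<subseteq> A"
      using IH[OF SA0 X_inert.prems(4) S0p] unfolding goodX_def by blast
    have ya: "y \<notin> cdom Pa" using Pa(3) y0 by auto
    show ?thesis
    proof (cases "y \<in> Ua \<union> Aa")
      case False
      show ?thesis
        by (rule goodX_I[OF Pa(1) isX.X_gc[OF Pa(2) ya False]]) (use Pa p False yw in auto)
    next
      case True
      show ?thesis
        by (rule goodX_I[OF Pa(1) isX.X_inert[OF Pa(2) ya True \<open>inert_plus i\<close>]])
           (use Pa p \<open>\<not> S \<inter> an i \<noteq> {}\<close> yw in auto)
    qed
  qed
next
  case (X_gc P U A y t)
  define p0 where "p0 = plugP P (Var w, [])"
  have p: "p = app_es p0 y t" using X_gc.prems(1) p0_def by simp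
  have y0: "y \<notin> pdom p0" using X_gc.hyps(2) p0_def by simp
  have S0p: "S \<inter> pdom p0 = {}" using X_gc.prems(5) p by auto
  have hh: "(\<forall>v. lookupP P w = Some v \<longrightarrow> is_val v) \<and> (y = w \<longrightarrow> is_val t)"
    using hyp_appP[OF X_gc.prems(2) X_gc.hyps(2)] .
  then have hP: "\<forall>v. lookupP P w = Some v \<longrightarrow> is_val v" by auto
  note IH = X_gc.IH[OF p0_def[symmetric] hP]
  obtain x Pa Ua Aa where Pa: "x \<in> S" "isX Pa Ua Aa" "plugP Pa (Var x, []) = p0" "S \<inter> Aa = {}"
      "Ua \<subseteq> insert w U \<union> A" "Aa \<subseteq> A"
    using IH[OF X_gc.prems(3) X_gc.prems(4) S0p] unfolding goodX_def by blast
  have ya: "y \<notin> cdom Pa" using Pa(3) y0 by auto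
  show ?case
  proof (cases "y \<in> Ua \<union> Aa")
    case False
    show ?thesis
      by (rule goodX_I[OF Pa(1) isX.X_gc[OF Pa(2) ya False]]) (use Pa p False in auto)
  next
    case True
    then have yw: "y = w" and yy: "y \<in> Ua - Aa" using Pa(5,6) \<open>y \<notin> U \<union> A\<close> by auto
    then have "is_val t" using hh by auto
    show ?thesis
      by (rule goodX_I[OF Pa(1) isX.X_val[OF Pa(2) ya yy \<open>is_val t\<close>]]) (use Pa p yw in auto)
  qed
next
  case (X_val P U A y v)
  define p0 where "p0 = plugP P (Var w, [])"
  have p: "p = app_es p0 y v" using X_val.prems(1) p0_def by simp
  have y0: "y \<notin> pdom p0" using X_val.hyps(2) p0_def by simp
  have S0p: "S \<inter> pdom p0 = {}" using X_val.prems(5) p by auto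
  have hh: "(\<forall>v'. lookupP P w = Some v' \<longrightarrow> is_val v') \<and> (y = w \<longrightarrow> is_val v)"
    using hyp_appP[OF X_val.prems(2) X_val.hyps(2)] .
  then have hP: "\<forall>v'. lookupP P w = Some v' \<longrightarrow> is_val v'" by auto
  note IH = X_val.IH[OF p0_def[symmetric] hP]
  obtain x Pa Ua Aa where Pa: "x \<in> S" "isX Pa Ua Aa" "plugP Pa (Var x, []) = p0" "S \<inter> Aa = {}"
      "Ua \<subseteq> insert w U \<union> A" "Aa \<subseteq> A"
    using IH[OF X_val.prems(3) X_val.prems(4) S0p] unfolding goodX_def by blast
  have ya: "y \<notin> cdom Pa" using Pa(3) y0 by auto
  show ?case
  proof (cases "y \<in> Ua")
    case True
    have yy: "y \<in> Ua - Aa" using True Pa(6) \<open>y \<in> U - A\<close> by auto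
    show ?thesis
      by (rule goodX_I[OF Pa(1) isX.X_val[OF Pa(2) ya yy \<open>is_val v\<close>]]) (use Pa p \<open>y \<in> U - A\<close> in auto)
  next
    case False
    have yy: "y \<notin> Ua \<union> Aa" using False Pa(6) \<open>y \<in> U - A\<close> by auto
    show ?thesis
      by (rule goodX_I[OF Pa(1) isX.X_gc[OF Pa(2) ya yy]]) (use Pa p yy \<open>y \<in> U - A\<close> in auto)
  qed
next
  case (X_hole P U A y)
  define p0 where "p0 = plugP P (Var y, [])"
  have p: "p = app_es p0 y (Var w)" using X_hole.prems(1) p0_def by simp
  have y0: "y \<notin> pdom p0" using X_hole.hyps(2) p0_def by simp
  have S0p: "S \<inter> pdom p0 = {}" using X_hole.prems(5) p by auto
  have hP: "\<forall>v. lookupP P y = Some v \<longrightarrow> is_val v" using lookupP_None[OF X_hole.hyps(2)] by auto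
  note IH = X_hole.IH[OF p0_def[symmetric] hP]
  obtain x Pa Ua Aa where Pa: "x \<in> S" "isX Pa Ua Aa" "plugP Pa (Var x, []) = p0" "S \<inter> Aa = {}"
      "Ua \<subseteq> insert y U \<union> A" "Aa \<subseteq> A"
    using IH[OF X_hole.prems(3) X_hole.prems(4) S0p] unfolding goodX_def by blast
  have ya: "y \<notin> cdom Pa" using Pa(3) y0 by auto
  have yA: "y \<notin> Aa" using Pa(6) \<open>y \<notin> A\<close> by auto
  show ?case
  proof (cases "y \<in> Ua")
    case False
    have yy: "y \<notin> Ua \<union> Aa" using False yA by auto
    show ?thesis
      by (rule goodX_I[OF Pa(1) isX.X_gc[OF Pa(2) ya yy]]) (use Pa p yy in auto)
  next
    case True
    then have yy: "y \<in> Ua \<union> Aa" by auto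
    have SA': "S \<inter> upd Aa y w = {}" using Pa(4) yA by (simp add: upd_def)
    show ?thesis
      by (rule goodX_I[OF Pa(1) isX.X_var[OF Pa(2) ya yy]]) (use Pa p SA' yA in \<open>auto simp: upd_def\<close>)
  qed
qed



definition NF :: "prog \<Rightarrow> bool" where
  "NF p \<longleftrightarrow> (\<forall>P U A s. isM P U A \<longrightarrow> plugP P (s, []) = p \<longrightarrow> \<not> is_redex s) \<and>
     (\<forall>P U A w v. isX P U A \<longrightarrow> plugP P (Var w, []) = p \<longrightarrow> lookupP P w = Some v \<longrightarrow> \<not> is_val v)"

lemma plug_nil: "plugP P (s, []) = (t, []) \<Longrightarrow> \<exists>C. P = PC C [] \<and> plugC C s = t"
  by (cases P) auto

lemma NF_base: "fireball t \<Longrightarrow> NF (t, [])"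
  unfolding NF_def
proof (intro conjI allI impI)
  fix P U A s
  assume "fireball t" "plugP P (s, []) = (t, [])"
  then show "\<not> is_redex s" using plug_nil fb_noredex by blast
next
  fix P U A w v
  assume "plugP P (Var w, []) = (t, [])" "lookupP P w = Some v"
  then show "\<not> is_val v" using plug_nil by fastforce
qed

lemma decM: "isM P' U' A' \<Longrightarrow> plugP P' (s, []) = app_es p x u \<Longrightarrow>
   (\<exists>P U A. isM P U A \<and> plugP P (s, []) = p \<and> P' = appP P x u) \<or>
   (\<exists>P U A H. isM P U A \<and> plugP P (Var x, []) = p \<and> isH H \<and> plugC H s = u)"
  by (erule isM.cases) (simp_all add: app_es_nil[symmetric], blast+)

lemma decX: "isX P' U' A' \<Longrightarrow> plugP P' (s, []) = app_es p x u \<Longrightarrow>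
   (\<exists>P U A. isX P U A \<and> plugP P (s, []) = p \<and> P' = appP P x u) \<or> (\<exists>H. P' = appC p x H)"
  by (erule isX.cases) (simp_all add: app_es_nil[symmetric], blast+)

lemma NF_app: "NF p \<Longrightarrow> x \<notin> pdom p \<Longrightarrow> (fireball u \<or> x \<notin> nvp p) \<Longrightarrow> (\<not> is_val u \<or> x \<notin> anp p) \<Longrightarrow>
   NF (app_es p x u)"
  unfolding NF_def
proof (intro conjI allI impI)
  fix P' U' A' s
  assume nf: "(\<forall>P U A s. isM P U A \<longrightarrow> plugP P (s, []) = p \<longrightarrow> \<not> is_redex s) \<and>
     (\<forall>P U A w v. isX P U A \<longrightarrow> plugP P (Var w, []) = p \<longrightarrow> lookupP P w = Some v \<longrightarrow> \<not> is_val v)"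
    and x: "x \<notin> pdom p" and c1: "fireball u \<or> x \<notin> nvp p"
    and m: "isM P' U' A'" and pl: "plugP P' (s, []) = app_es p x u"
  from decM[OF m pl] show "\<not> is_redex s"
  proof
    assume "\<exists>P U A. isM P U A \<and> plugP P (s, []) = p \<and> P' = appP P x u"
    then show ?thesis using nf by blast
  next
    assume "\<exists>P U A H. isM P U A \<and> plugP P (Var x, []) = p \<and> isH H \<and> plugC H s = u"
    then obtain P U A H where h: "isM P U A" "plugP P (Var x, []) = p" "isH H" "plugC H s = u" by blast
    have "x \<in> nvp p" using lemN[OF h(1) h(2) x] .
    then have "fireball (plugC H s)" using c1 h(4) by simp
    then show ?thesis using fb_noredex by blast
  qed
next
  fix P' U' A' w v
  assume nf: "(\<forall>P U A s. isM P U A \<longrightarrow> plugP P (s, []) = p \<longrightarrow> \<not> is_redex s) \<and>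
     (\<forall>P U A w v. isX P U A \<longrightarrow> plugP P (Var w, []) = p \<longrightarrow> lookupP P w = Some v \<longrightarrow> \<not> is_val v)"
    and x: "x \<notin> pdom p" and c2: "\<not> is_val u \<or> x \<notin> anp p"
    and m: "isX P' U' A'" and pl: "plugP P' (Var w, []) = app_es p x u" and lk: "lookupP P' w = Some v"
  from decX[OF m pl] show "\<not> is_val v"
  proof
    assume "\<exists>P U A. isX P U A \<and> plugP P (Var w, []) = p \<and> P' = appP P x u"
    then obtain P U A where h: "isX P U A" "plugP P (Var w, []) = p" "P' = appP P x u" by blast
    show ?thesis
    proof (cases "lookupP P w")
      case None
      then have "w = x" "v = u" using lk h(3) by (auto split: if_splits)
      then have "x \<in> anp p" using lemA[OF h(1) h(2)] x by simp
      then show ?thesis using c2 \<open>v = u\<close> by simp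
    next
      case (Some v0)
      then have "v = v0" using lk h(3) by simp
      then show ?thesis using nf h Some by blast
    qed
  next
    assume "\<exists>H. P' = appC p x H"
    then show ?thesis using lk by auto
  qed
qed

lemma fireball_var: "fireball (Var y)" by (simp add: fireball_def inert.intros)
lemma fireball_val: "is_val v \<Longrightarrow> fireball v" by (simp add: fireball_def)
lemma fireball_inert: "inert i \<Longrightarrow> fireball i" by (simp add: fireball_def)

lemma gvar_NF: "gvar y p \<Longrightarrow> NF p \<and> nvp p = {y} \<and> anp p = {}"
proof (induction rule: gvar.induct)
  case (1 x) then show ?case using NF_base fireball_var by simp
next
  case (2 x p y)
  then show ?case using NF_app[of p x "Var y"] fireball_var by simp
next
  case (3 x p z t)
  then show ?case using NF_app[of p z t] by simp
qed

lemma uabs_NF: "uabs p \<Longrightarrow> NF p \<and> nvp p = {}"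
proof (induction rule: uabs.induct)
  case (1 v) then show ?case using NF_base fireball_val val_nv by simp
next
  case (2 x p v)
  then show ?case using gvar_NF[OF 2(1)] NF_app[of p x v] fireball_val val_nv by simp
next
  case (3 p x t)
  then show ?case using NF_app[of p x t] anp_nvp[of p] by auto
qed

lemma uinert_NF: "uinert p \<Longrightarrow> NF p"
proof (induction rule: uinert.induct)
  case (1 i) then show ?case using NF_base fireball_inert by (simp add: inert_plus_def)
next
  case (2 x p i)
  have "\<not> is_val i" using \<open>inert_plus i\<close> by (auto simp: inert_plus_def elim: inert.cases)
  then show ?case using gvar_NF[OF 2(1)] NF_app[of p x i] fireball_inert \<open>inert_plus i\<close> 2(2)
    by (simp add: inert_plus_def)
next
  case (3 p x i)
  have "\<not> is_val i" using \<open>inert i\<close> by (auto elim: inert.cases)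
  then show ?case using NF_app[of p x i] fireball_inert 3 by simp
next
  case (4 p x v)
  then show ?case using NF_app[of p x v] fireball_val by simp
next
  case (5 p x t)
  then show ?case using NF_app[of p x t] anp_nvp[of p] by auto
qed

lemma unorm_NF: "unorm p \<Longrightarrow> NF p"
  unfolding unorm_def using uinert_NF uabs_NF gvar_NF by blast

lemma NF_nostep: "NF p \<Longrightarrow> \<not> und_step p q"
  unfolding NF_def und_step_def um_step_def ue_step_def by fastforce



definition SM :: "prog \<Rightarrow> bool" where
  "SM p \<longleftrightarrow> (\<exists>P U A s. isM P U A \<and> plugP P (s, []) = p \<and> is_redex s)"

definition SX :: "prog \<Rightarrow> bool" where
  "SX p \<longleftrightarrow> (\<exists>P U A w v. isX P U A \<and> plugP P (Var w, []) = p \<and> lookupP P w = Some v \<and> is_val v)"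

lemma finite_vars: "finite (vars t)"
  by (induction t) auto

lemma finite_pvars: "finite (pvars p)"
  unfolding pvars_def using finite_vars by (auto split: prod.splits)

lemma redex_form: "is_redex s \<Longrightarrow> \<exists>x t u. s = App (Lam x t) u"
  by (induction s rule: is_redex.induct) auto

lemma step_of: assumes "SM p \<or> SX p" shows "\<exists>q. und_step p q"
  using assms
proof
  assume "SM p"
  then obtain P U A s where h: "isM P U A" "plugP P (s, []) = p" "is_redex s" unfolding SM_def by blast
  then obtain x t u where s: "s = App (Lam x t) u" using redex_form by blast
  obtain z where z: "z \<notin> pvars p" using finite_pvars ex_new_if_finite[OF infinite_UNIV_nat] by blast
  have "um_step p (plugP P (swap x z t, [(z, u)]))"
    unfolding um_step_def using h s z by blast
  then show ?thesis unfolding und_step_def by blast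
next
  assume "SX p"
  then obtain P U A w v where h: "isX P U A" "plugP P (Var w, []) = p" "lookupP P w = Some v" "is_val v"
    unfolding SX_def by blast
  have "ue_step p (plugP P (v, []))" unfolding ue_step_def using h by blast
  then show ?thesis unfolding und_step_def by blast
qed

lemma refineM: "isM P U A \<Longrightarrow> plugP P (Var x, []) = p \<Longrightarrow> x \<notin> pdom p \<Longrightarrow>
   \<exists>P2 U2 A2. isM P2 U2 A2 \<and> plugP P2 (Var x, []) = p \<and> x \<notin> U2 \<union> A2"
proof (cases "x \<in> U \<union> A")
  case True
  assume "isM P U A" "plugP P (Var x, []) = p" "x \<notin> pdom p"
  then show ?thesis using L1[OF _ _ True] unfolding goodM_def by blast
qed blast

lemma refineX: "isX P U A \<Longrightarrow> plugP P (Var x, []) = p \<Longrightarrow> x \<notin> pdom p \<Longrightarrow>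
   \<exists>P2 U2 A2. isX P2 U2 A2 \<and> plugP P2 (Var x, []) = p \<and> x \<notin> A2"
proof (cases "x \<in> A")
  case True
  assume h: "isX P U A" "plugP P (Var x, []) = p" "x \<notin> pdom p"
  have hyp: "\<forall>v. lookupP P x = Some v \<longrightarrow> is_val v" using lookupP_None[of x P] h by auto
  have "goodX p {x} (insert x U) A" using L4[OF h(1) h(2) hyp] True h(3) by auto
  then show ?thesis unfolding goodX_def by blast
qed blast

lemma hole_step: "isM P U A \<Longrightarrow> plugP P (Var x, []) = p \<Longrightarrow> x \<notin> pdom p \<Longrightarrow> \<not> fireball u \<Longrightarrow>
   SM (app_es p x u)"
proof -
  assume h: "isM P U A" "plugP P (Var x, []) = p" "x \<notin> pdom p" "\<not> fireball u"
  obtain P2 U2 A2 where P2: "isM P2 U2 A2" "plugP P2 (Var x, []) = p" "x \<notin> U2 \<union> A2"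
    using refineM[OF h(1-3)] by blast
  obtain H r where Hr: "isH H" "plugC H r = u" "is_redex r" using nonfb_redex[OF h(4)] by blast
  have x2: "x \<notin> cdom P2" using P2(2) h(3) by auto
  have "isM (appC (plugP P2 (Var x, [])) x H) (U2 \<union> ctx_un H) (A2 \<union> ctx_an H)"
    using isM.M_hole[OF P2(1) x2 P2(3) Hr(1)] .
  moreover have "plugP (appC (plugP P2 (Var x, [])) x H) (r, []) = app_es p x u" using P2(2) Hr(2) by simp
  ultimately show ?thesis unfolding SM_def using Hr(3) by blast
qed

lemma val_step0: "isX P U A \<Longrightarrow> plugP P (Var x, []) = p \<Longrightarrow> x \<notin> pdom p \<Longrightarrow> x \<notin> A \<Longrightarrow> is_val u \<Longrightarrow>
   SX (app_es p x u)"
proof -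
  assume h: "isX P U A" "plugP P (Var x, []) = p" "x \<notin> pdom p" "x \<notin> A" "is_val u"
  have xc: "x \<notin> cdom P" using h(2,3) by auto
  have lk: "lookupP (appP P x u) x = Some u" using lookupP_None[OF xc] by simp
  have "\<exists>U' A'. isX (appP P x u) U' A'"
  proof (cases "x \<in> U")
    case True
    then show ?thesis using isX.X_val[OF h(1) xc _ h(5)] h(4) by blast
  next
    case False
    then show ?thesis using isX.X_gc[OF h(1) xc] h(4) by blast
  qed
  then show ?thesis unfolding SX_def using lk h(2,5) by fastforce
qed

lemma val_step: "isX P U A \<Longrightarrow> plugP P (Var x, []) = p \<Longrightarrow> x \<notin> pdom p \<Longrightarrow> is_val u \<Longrightarrow>
   SX (app_es p x u)"
  using refineX val_step0 by metis

lemma fb_cases: "fireball u \<Longrightarrow> is_var u \<or> inert_plus u \<or> is_val u"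
  by (auto simp: fireball_def inert_plus_def)

lemma lift: "SM p \<or> SX p \<Longrightarrow> x \<notin> pdom p \<Longrightarrow> SM (app_es p x u) \<or> SX (app_es p x u)"
proof -
  assume x: "x \<notin> pdom p"
  assume "SM p \<or> SX p"
  then show ?thesis
  proof
    assume "SM p"
    then obtain P U A s where h: "isM P U A" "plugP P (s, []) = p" "is_redex s" unfolding SM_def by blast
    have xc: "x \<notin> cdom P" using h(2) x by auto
    have ok: "SM (app_es p x u)" if "isM (appP P x u) U' A'" for U' A'
      unfolding SM_def using that h by (intro exI[of _ "appP P x u"] exI[of _ U'] exI[of _ A'] exI[of _ s]) simp
    show ?thesis
    proof (cases "x \<in> U \<union> A")
      case False
      then show ?thesis using ok isM.M_gc[OF h(1) xc False] by blast
    next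
      case True
      show ?thesis
      proof (cases "fireball u")
        case False
        obtain P2 U2 A2 where "isM P2 U2 A2" "plugP P2 (Var x, []) = p"
          using L1[OF h(1) h(2) True x] unfolding goodM_def by blast
        then show ?thesis using hole_step False x by blast
      next
        case fb: True
        show ?thesis
        proof (cases "is_var u")
          case True
          then obtain y where "u = Var y" by (cases u) auto
          then show ?thesis using ok isM.M_var[OF h(1) xc \<open>x \<in> U \<union> A\<close>] by blast
        next
          case nv: False
          show ?thesis
          proof (cases "inert_plus u")
            case True
            then show ?thesis using ok isM.M_inert[OF h(1) xc \<open>x \<in> U \<union> A\<close>] by blast
          next
            case False
            then have vu: "is_val u" using fb_cases[OF fb] nv by blast
            show ?thesis
            proof (cases "x \<in> A")
              case False
              then have "x \<in> U - A" using \<open>x \<in> U \<union> A\<close> by blast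
              then show ?thesis using ok isM.M_val[OF h(1) xc _ vu] by blast
            next
              case True
              have "goodX p {x} U A" using L2[OF h(1) h(2)] True x by auto
              then obtain Pa Ua Aa where "isX Pa Ua Aa" "plugP Pa (Var x, []) = p" "x \<notin> Aa"
                unfolding goodX_def by blast
              then show ?thesis using val_step0 x vu by blast
            qed
          qed
        qed
      qed
    qed
  next
    assume "SX p"
    then obtain P U A w v where h: "isX P U A" "plugP P (Var w, []) = p" "lookupP P w = Some v" "is_val v"
      unfolding SX_def by blast
    have xc: "x \<notin> cdom P" using h(2) x by auto
    have ok: "SX (app_es p x u)" if "isX (appP P x u) U' A'" for U' A'
      unfolding SX_def using that h
      by (intro exI[of _ "appP P x u"] exI[of _ U'] exI[of _ A'] exI[of _ w] exI[of _ v]) simp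
    have hyp: "\<forall>v. lookupP P w = Some v \<longrightarrow> is_val v" using h(3,4) by simp
    show ?thesis
    proof (cases "x \<in> U \<union> A")
      case False
      then show ?thesis using ok isX.X_gc[OF h(1) xc False] by blast
    next
      case True
      show ?thesis
      proof (cases "fireball u")
        case False
        obtain P2 U2 A2 where "isM P2 U2 A2" "plugP P2 (Var x, []) = p"
          using L3[OF h(1) h(2) hyp True x] unfolding goodM_def by blast
        then show ?thesis using hole_step False x by blast
      next
        case fb: True
        show ?thesis
        proof (cases "is_var u")
          case True
          then obtain y where "u = Var y" by (cases u) auto
          then show ?thesis using ok isX.X_var[OF h(1) xc \<open>x \<in> U \<union> A\<close>] by blast
        next
          case nv: False
          show ?thesis
          proof (cases "inert_plus u")
            case True
            then show ?thesis using ok isX.X_inert[OF h(1) xc \<open>x \<in> U \<union> A\<close>] by blast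
          next
            case False
            then have vu: "is_val u" using fb_cases[OF fb] nv by blast
            show ?thesis
            proof (cases "x \<in> A")
              case False
              then have "x \<in> U - A" using \<open>x \<in> U \<union> A\<close> by blast
              then show ?thesis using ok isX.X_val[OF h(1) xc _ vu] by blast
            next
              case True
              have "goodX p {x} (insert w U) A" using L4[OF h(1) h(2) hyp] True x by auto
              then obtain Pa Ua Aa where "isX Pa Ua Aa" "plugP Pa (Var x, []) = p" "x \<notin> Aa"
                unfolding goodX_def by blast
              then show ?thesis using val_step0 x vu by blast
            qed
          qed
        qed
      qed
    qed
  qed
qed



lemma ext_M: "isM P U A \<Longrightarrow> plugP P (s, []) = p \<Longrightarrow> y \<notin> pdom p \<Longrightarrow>
   inert u \<or> y \<notin> U \<union> A \<or> (is_val u \<and> y \<notin> A) \<Longrightarrow>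
   \<exists>P' U' A'. isM P' U' A' \<and> plugP P' (s, []) = app_es p y u"
proof -
  assume h: "isM P U A" "plugP P (s, []) = p" "y \<notin> pdom p" and c: "inert u \<or> y \<notin> U \<union> A \<or> (is_val u \<and> y \<notin> A)"
  have yc: "y \<notin> cdom P" using h(2,3) by auto
  have pl: "plugP (appP P y u) (s, []) = app_es p y u" using h(2) by simp
  show ?thesis
  proof (cases "y \<in> U \<union> A")
    case False
    then show ?thesis using isM.M_gc[OF h(1) yc False] pl by blast
  next
    case True
    show ?thesis
    proof (cases "is_var u")
      case True
      then obtain z where "u = Var z" by (cases u) auto
      then show ?thesis using isM.M_var[OF h(1) yc \<open>y \<in> U \<union> A\<close>] pl by blast
    next
      case False
      show ?thesis
      proof (cases "inert u")
        case True
        then have "inert_plus u" using False by (simp add: inert_plus_def)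
        then show ?thesis using isM.M_inert[OF h(1) yc \<open>y \<in> U \<union> A\<close>] pl by blast
      next
        case False
        then have "is_val u" "y \<in> U - A" using c \<open>y \<in> U \<union> A\<close> by auto
        then show ?thesis using isM.M_val[OF h(1) yc] pl by blast
      qed
    qed
  qed
qed

lemma ext_X: "isX P U A \<Longrightarrow> plugP P (s, []) = p \<Longrightarrow> y \<notin> pdom p \<Longrightarrow>
   inert u \<or> y \<notin> U \<union> A \<or> (is_val u \<and> y \<notin> A) \<Longrightarrow>
   \<exists>P' U' A'. isX P' U' A' \<and> plugP P' (s, []) = app_es p y u"
proof -
  assume h: "isX P U A" "plugP P (s, []) = p" "y \<notin> pdom p" and c: "inert u \<or> y \<notin> U \<union> A \<or> (is_val u \<and> y \<notin> A)"
  have yc: "y \<notin> cdom P" using h(2,3) by auto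
  have pl: "plugP (appP P y u) (s, []) = app_es p y u" using h(2) by simp
  show ?thesis
  proof (cases "y \<in> U \<union> A")
    case False
    then show ?thesis using isX.X_gc[OF h(1) yc False] pl by blast
  next
    case True
    show ?thesis
    proof (cases "is_var u")
      case True
      then obtain z where "u = Var z" by (cases u) auto
      then show ?thesis using isX.X_var[OF h(1) yc \<open>y \<in> U \<union> A\<close>] pl by blast
    next
      case False
      show ?thesis
      proof (cases "inert u")
        case True
        then have "inert_plus u" using False by (simp add: inert_plus_def)
        then show ?thesis using isX.X_inert[OF h(1) yc \<open>y \<in> U \<union> A\<close>] pl by blast
      next
        case False
        then have "is_val u" "y \<in> U - A" using c \<open>y \<in> U \<union> A\<close> by auto
        then show ?thesis using isX.X_val[OF h(1) yc] pl by blast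
      qed
    qed
  qed
qed

lemma hole_M: "isM P U A \<Longrightarrow> plugP P (Var y, []) = p \<Longrightarrow> y \<notin> pdom p \<Longrightarrow> isH H \<Longrightarrow>
   \<exists>P' U' A'. isM P' U' A' \<and> plugP P' (s, []) = app_es p y (plugC H s)"
proof -
  assume h: "isM P U A" "plugP P (Var y, []) = p" "y \<notin> pdom p" "isH H"
  obtain P2 U2 A2 where P2: "isM P2 U2 A2" "plugP P2 (Var y, []) = p" "y \<notin> U2 \<union> A2"
    using refineM[OF h(1-3)] by blast
  have y2: "y \<notin> cdom P2" using P2(2) h(3) by auto
  show ?thesis using isM.M_hole[OF P2(1) y2 P2(3) h(4)] P2(2) by fastforce
qed

lemma hole_X: "isM P U A \<Longrightarrow> plugP P (Var y, []) = p \<Longrightarrow> y \<notin> pdom p \<Longrightarrow> isHa H \<Longrightarrow>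
   \<exists>P' U' A'. isX P' U' A' \<and> plugP P' (s, []) = app_es p y (plugC H s)"
proof -
  assume h: "isM P U A" "plugP P (Var y, []) = p" "y \<notin> pdom p" "isHa H"
  obtain P2 U2 A2 where P2: "isM P2 U2 A2" "plugP P2 (Var y, []) = p" "y \<notin> U2 \<union> A2"
    using refineM[OF h(1-3)] by blast
  have y2: "y \<notin> cdom P2" using P2(2) h(3) by auto
  show ?thesis using isX.X_fromM[OF P2(1) y2 P2(3) h(4)] P2(2) by fastforce
qed

lemma gvar_M: "gvar y p \<Longrightarrow> y \<notin> pdom p \<Longrightarrow> \<exists>P U A. isM P U A \<and> plugP P (Var y, []) = p"
proof (induction rule: gvar.induct)
  case (1 x)
  have "isM (PC Hole []) (ctx_un Hole) (ctx_an Hole)" by (rule isM.M_base[OF isH.intros(1)])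
  then show ?case by fastforce
next
  case (2 x p y)
  then obtain P U A where "isM P U A" "plugP P (Var x, []) = p" by blast
  then show ?case using hole_M[OF _ _ \<open>x \<notin> pdom p\<close> isH.intros(1), of P U A "Var y"] by auto
next
  case (3 x p z t)
  then have "x \<notin> pdom p" by simp
  then obtain P U A where P: "isM P U A" "plugP P (Var x, []) = p" using 3 by blast
  have "U \<subseteq> {x}" "A \<subseteq> {}" using INV_M[OF P] gvar_NF[OF 3(1)] by auto
  then have "z \<notin> U \<union> A" using \<open>z \<noteq> x\<close> by auto
  then show ?case using ext_M[OF P(1) P(2) \<open>z \<notin> pdom p\<close>, of t] by blast
qed

lemma L5: "uinert p \<Longrightarrow> x \<in> nvp p \<Longrightarrow> x \<notin> pdom p \<Longrightarrow> \<exists>P U A. isM P U A \<and> plugP P (Var x, []) = p"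
proof (induction arbitrary: x rule: uinert.induct)
  case (1 i)
  have ii: "inert i" using \<open>inert_plus i\<close> by (simp add: inert_plus_def)
  obtain H where H: "isH H" "plugC H (Var x) = i" using inert_lemma_M[OF ii] 1 by auto
  have "isM (PC H []) (ctx_un H) (ctx_an H)" by (rule isM.M_base[OF H(1)])
  then show ?case using H(2) by fastforce
next
  case (2 y p i)
  have ii: "inert i" using \<open>inert_plus i\<close> by (simp add: inert_plus_def)
  have "nvp p = {y}" using gvar_NF[OF 2(1)] by simp
  then have xi: "x \<in> nv i" using 2(4) by auto
  obtain P U A where P: "isM P U A" "plugP P (Var y, []) = p" using gvar_M[OF 2(1) 2(2)] by blast
  obtain H where H: "isH H" "plugC H (Var x) = i" using inert_lemma_M[OF ii xi] by auto
  show ?case using hole_M[OF P 2(2) H(1), of "Var x"] H(2) by auto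
next
  case (3 p y i)
  have xy: "x \<noteq> y" "x \<notin> pdom p" using 3(7) by auto
  show ?case
  proof (cases "x \<in> nv i")
    case True
    obtain P U A where P: "isM P U A" "plugP P (Var y, []) = p" using 3(5)[OF 3(3) 3(2)] by blast
    obtain H where H: "isH H" "plugC H (Var x) = i" using inert_lemma_M[OF 3(4) True] by auto
    show ?thesis using hole_M[OF P 3(2) H(1), of "Var x"] H(2) by auto
  next
    case False
    then have "x \<in> nvp p" using 3(6) 3(3) by auto
    then obtain P U A where P: "isM P U A" "plugP P (Var x, []) = p" using 3(5) xy(2) by blast
    show ?thesis using ext_M[OF P 3(2)] 3(4) by blast
  qed
next
  case (4 p y v)
  have "y \<in> nvp p" using \<open>y \<in> unp p\<close> unp_nvp by blast
  then have "x \<in> nvp p" "x \<notin> pdom p" using 4(7,8) val_nv[OF \<open>is_val v\<close>] by auto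
  then obtain P U A where P: "isM P U A" "plugP P (Var x, []) = p" using "4.IH" by blast
  have "A \<subseteq> anp p" using INV_M[OF P] by auto
  then have "y \<notin> A" using \<open>y \<notin> anp p\<close> by auto
  then show ?case using ext_M[OF P \<open>y \<notin> pdom p\<close>] \<open>is_val v\<close> by blast
next
  case (5 p y t)
  then have "x \<in> nvp p" "x \<notin> pdom p" by auto
  then obtain P U A where P: "isM P U A" "plugP P (Var x, []) = p" using "5.IH" by blast
  have "U \<union> A \<subseteq> nvp p" using INV_M[OF P] anp_nvp[of p] by auto
  then have "y \<notin> U \<union> A" using \<open>y \<notin> nvp p\<close> by auto
  then show ?case using ext_M[OF P \<open>y \<notin> pdom p\<close>] by blast
qed

lemma L6: "uinert p \<Longrightarrow> x \<in> anp p \<Longrightarrow> x \<notin> pdom p \<Longrightarrow> \<exists>P U A. isX P U A \<and> plugP P (Var x, []) = p"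
proof (induction arbitrary: x rule: uinert.induct)
  case (1 i)
  have ii: "inert i" using \<open>inert_plus i\<close> by (simp add: inert_plus_def)
  have "{x} \<inter> an i \<noteq> {}" using 1 by simp
  then obtain H where H: "isHa H" "plugC H (Var x) = i" using inert_lemma_X[OF ii] by blast
  have "isX (PC H []) (ctx_un H) (ctx_an H)" by (rule isX.X_base[OF H(1)])
  then show ?case using H(2) by fastforce
next
  case (2 y p i)
  have ii: "inert i" using \<open>inert_plus i\<close> by (simp add: inert_plus_def)
  have "nvp p = {y}" "anp p = {}" using gvar_NF[OF 2(1)] by auto
  then have xi: "x \<in> an i" using 2(4) by auto
  then have "{x} \<inter> an i \<noteq> {}" by auto
  then obtain H where H: "isHa H" "plugC H (Var x) = i" using inert_lemma_X[OF ii] by blast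
  obtain P U A where P: "isM P U A" "plugP P (Var y, []) = p" using gvar_M[OF 2(1) 2(2)] by blast
  show ?case using hole_X[OF P 2(2) H(1), of "Var x"] H(2) by auto
next
  case (3 p y i)
  have xy: "x \<noteq> y" "x \<notin> pdom p" using 3(7) by auto
  have ext: ?case if xa: "x \<in> anp p"
  proof -
    obtain P U A where P: "isX P U A" "plugP P (Var x, []) = p" using 3(5) xa xy(2) by blast
    show ?thesis using ext_X[OF P 3(2)] 3(4) by blast
  qed
  show ?case
  proof (cases "y \<notin> anp p \<or> \<not> is_var i")
    case True
    then have "x \<in> (anp p - {y}) \<union> an i" using 3(6) 3(3) by auto
    then show ?thesis
    proof
      assume "x \<in> anp p - {y}" then show ?thesis using ext by blast
    next
      assume xi: "x \<in> an i"
      then have "{x} \<inter> an i \<noteq> {}" by auto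
      then obtain H where H: "isHa H" "plugC H (Var x) = i" using inert_lemma_X[OF 3(4)] by blast
      obtain P U A where P: "isM P U A" "plugP P (Var y, []) = p" using L5[OF 3(1) 3(3) 3(2)] by blast
      show ?thesis using hole_X[OF P 3(2) H(1), of "Var x"] H(2) by auto
    qed
  next
    case False
    then obtain z where z: "i = Var z" and ya: "y \<in> anp p" by (cases i) auto
    then have "x \<in> (anp p - {y}) \<union> {z}" using 3(6) 3(3) by auto
    then show ?thesis
    proof
      assume "x \<in> anp p - {y}" then show ?thesis using ext by blast
    next
      assume "x \<in> {z}"
      then have xz: "x = z" by simp
      obtain P U A where P: "isX P U A" "plugP P (Var y, []) = p" using 3(5)[OF ya 3(2)] by blast
      obtain P2 U2 A2 where P2: "isX P2 U2 A2" "plugP P2 (Var y, []) = p" "y \<notin> A2"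
        using refineX[OF P 3(2)] by blast
      have y2: "y \<notin> cdom P2" using P2(2) 3(2) by auto
      show ?thesis using isX.X_hole[OF P2(1) y2 P2(3)] P2(2) z xz by fastforce
    qed
  qed
next
  case (4 p y v)
  have "y \<in> nvp p" using \<open>y \<in> unp p\<close> unp_nvp by blast
  then have "x \<in> anp p" "x \<notin> pdom p" using \<open>y \<notin> anp p\<close> 4(7,8) val_an[OF \<open>is_val v\<close>] by (auto split: if_splits)
  then obtain P U A where P: "isX P U A" "plugP P (Var x, []) = p" using "4.IH" by blast
  have "A \<subseteq> anp p" using INV_X[OF P] by auto
  then have "y \<notin> A" using \<open>y \<notin> anp p\<close> by auto
  then show ?case using ext_X[OF P \<open>y \<notin> pdom p\<close>] \<open>is_val v\<close> by blast
next
  case (5 p y t)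
  then have "x \<in> anp p" "x \<notin> pdom p" by auto
  then obtain P U A where P: "isX P U A" "plugP P (Var x, []) = p" using "5.IH" by blast
  have "U \<union> A \<subseteq> nvp p" using INV_X[OF P] anp_nvp[of p] by auto
  then have "y \<notin> U \<union> A" using \<open>y \<notin> nvp p\<close> by auto
  then show ?case using ext_X[OF P \<open>y \<notin> pdom p\<close>] by blast
qed

lemma wellnamed_app: "wellnamed (app_es p x u) \<Longrightarrow> wellnamed p \<and> x \<notin> pdom p"
proof -
  assume w: "wellnamed (app_es p x u)"
  have pbl: "pbl (app_es p x u) = pbl p @ (x # bl u)" by (simp add: pbl_def app_es_def)
  have fvp: "fvp (app_es p x u) = (fvp p - {x}) \<union> fv u" by (simp add: fvp_def app_es_def)
  have dom: "pdom p \<subseteq> set (pbl p)" by (auto simp: pdom_def pbl_def)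
  from w have d: "distinct (pbl p)" "x \<notin> set (pbl p)" unfolding wellnamed_def pbl by auto
  from w have "set (pbl p) \<inter> (fvp p - {x}) = {}" unfolding wellnamed_def pbl fvp by auto
  then have "set (pbl p) \<inter> fvp p = {}" using d(2) by auto
  then show ?thesis using d dom unfolding wellnamed_def by auto
qed

lemma mainB: "wellnamed p \<Longrightarrow> \<not> unorm p \<Longrightarrow> SM p \<or> SX p"
proof -
  obtain t E where pE: "p = (t, E)" by fastforce
  have "wellnamed (t, E) \<Longrightarrow> \<not> unorm (t, E) \<Longrightarrow> SM (t, E) \<or> SX (t, E)"
  proof (induction E rule: rev_induct)
    case Nil
    have "\<not> fireball t"
    proof
      assume fb: "fireball t"
      have "unorm (t, [])"
      proof (cases "is_var t")
        case True
        then obtain y where "t = Var y" by (cases t) auto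
        then show ?thesis unfolding unorm_def using gvar.intros(1) by blast
      next
        case False
        then have "inert_plus t \<or> is_val t" using fb_cases[OF fb] by blast
        then show ?thesis unfolding unorm_def using uinert.intros(1) uabs.intros(1) by blast
      qed
      then show False using Nil by simp
    qed
    then obtain H r where Hr: "isH H" "plugC H r = t" "is_redex r" using nonfb_redex by blast
    have "isM (PC H []) (ctx_un H) (ctx_an H)" by (rule isM.M_base[OF Hr(1)])
    then show ?case unfolding SM_def using Hr by fastforce
  next
    case (snoc a E)
    obtain x u where a: "a = (x, u)" by fastforce
    let ?p = "(t, E)"
    have pp: "(t, E @ [a]) = app_es ?p x u" using a by (simp add: app_es_def)
    have wn: "wellnamed ?p" and x: "x \<notin> pdom ?p" using wellnamed_app snoc.prems(1) pp by metis+
    have nu: "\<not> unorm (app_es ?p x u)" using snoc.prems(2) pp by simp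
    have "SM (app_es ?p x u) \<or> SX (app_es ?p x u)"
    proof (cases "unorm ?p")
      case False
      then show ?thesis using snoc.IH[OF wn] lift x by blast
    next
      case True
      then consider (g) y where "gvar y ?p" | (a) "uabs ?p" | (i) "uinert ?p" unfolding unorm_def by blast
      then show ?thesis
      proof cases
        case g
        show ?thesis
        proof (cases "x = y")
          case False
          then have "gvar y (app_es ?p x u)" using gvar.intros(3)[OF g x] by blast
          then show ?thesis using nu unfolding unorm_def by blast
        next
          case True
          show ?thesis
          proof (cases "fireball u")
            case False
            obtain P U A where P: "isM P U A" "plugP P (Var y, []) = ?p" using gvar_M[OF g] x True by blast
            then show ?thesis using hole_step False x True by blast
          next
            case fb: True
            have "unorm (app_es ?p x u)"
            proof -
              consider (v) "is_var u" | (ip) "inert_plus u" | (vl) "is_val u" using fb_cases[OF fb] by blast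
              then show ?thesis
              proof cases
                case v
                then obtain z where "u = Var z" by (cases u) auto
                then show ?thesis unfolding unorm_def using gvar.intros(2)[OF g] x True by blast
              next
                case ip
                then show ?thesis unfolding unorm_def using uinert.intros(2)[OF g] x True by blast
              next
                case vl
                then show ?thesis unfolding unorm_def using uabs.intros(2)[OF g] x True by blast
              qed
            qed
            then show ?thesis using nu by blast
          qed
        qed
      next
        case a
        then have "uabs (app_es ?p x u)" using uabs.intros(3) x by blast
        then show ?thesis using nu unfolding unorm_def by blast
      next
        case i
        show ?thesis
        proof (cases "x \<in> nvp ?p")
          case False
          then have "uinert (app_es ?p x u)" using uinert.intros(5)[OF i x] by blast
          then show ?thesis using nu unfolding unorm_def by blast
        next
          case xn: True
          show ?thesis
          proof (cases "fireball u")
            case False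
            obtain P U A where P: "isM P U A" "plugP P (Var x, []) = ?p" using L5[OF i xn x] by blast
            then show ?thesis using hole_step False x by blast
          next
            case fb: True
            show ?thesis
            proof (cases "inert u")
              case True
              then have "uinert (app_es ?p x u)" using uinert.intros(3)[OF i x xn] by blast
              then show ?thesis using nu unfolding unorm_def by blast
            next
              case False
              then have vu: "is_val u" using fb by (simp add: fireball_def)
              show ?thesis
              proof (cases "x \<in> anp ?p")
                case True
                obtain P U A where P: "isX P U A" "plugP P (Var x, []) = ?p" using L6[OF i True x] by blast
                then show ?thesis using val_step vu x by blast
              next
                case False
                then have "x \<in> unp ?p" using xn nvp_un_an by blast
                then have "uinert (app_es ?p x u)" using uinert.intros(4)[OF i x _ False vu] by blast
                then show ?thesis using nu unfolding unorm_def by blast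
              qed
            qed
          qed
        qed
      qed
    qed
    then show ?case using pp by simp
  qed
  then show "wellnamed p \<Longrightarrow> \<not> unorm p \<Longrightarrow> SM p \<or> SX p" using pE by simp
qed

theorem mainTheorem8:
  fixes p :: prog
  assumes "wellnamed p"
  shows "(\<not> (\<exists>q. und_step p q)) \<longleftrightarrow> unorm p"
proof
  assume ns: "\<not> (\<exists>q. und_step p q)"
  show "unorm p"
  proof (rule ccontr)
    assume "\<not> unorm p"
    then have "SM p \<or> SX p" using mainB assms by blast
    then show False using step_of ns by blast
  qed
next
  assume "unorm p"
  then show "\<not> (\<exists>q. und_step p q)" using unorm_NF NF_nostep by blast
qed


end
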